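(* Let $n\ge3$ and $\ell\in\{1,\dots,n-2\}$. Define $$K^\pm_\ell=\big(\Gamma_{\{\ell+1,\ell+2\}}\pm\Gamma_{[\ell+2]\setminus\{\ell+1\}}\big)\big(\Gamma_{[\ell+1]}\mp\tfrac12\big)-\big(\Gamma_{\{\ell+2\}}\pm\Gamma_{[\ell+2]}\big)\big(\Gamma_{[\ell]}\pm\Gamma_{\{\ell+1\}}\big).$$ Then $[K^\pm_\ell,\Gamma_{[j]}]=0$ for all $j\in[n]$ with $j\ne\ell+1$, and $\{K^\pm_\ell,\Gamma_{[\ell+1]}\}=\pm K^\pm_\ell$.
   Context: Fix $n\ge1$ and real parameters $\mu_1,\dots,\mu_n>0$; write $[\ell]=\{1,\dots,\ell\}$. For $i\in[n]$, $r_i$ is the reflection $(r_if)(x)=f(x_1,\dots,-x_i,\dots,x_n)$ and $T_i=\partial_{x_i}+\frac{\mu_i}{x_i}(1-r_i)$. $\mathcal{C}\ell_n$ is generated by $e_1,\dots,e_n$ with $e_ie_j+e_je_i=-2\delta_{ij}$, $V$ is a fixed left $\mathcal{C}\ell_n$-module, and operators act on $\mathcal{P}(\mathbb{R}^n)\otimes V$ with $x_i,T_i,r_i$ acting on the polynomial factor and $e_i$ on $V$. For $A\subseteq[n]$: $\underline{D}_A=\sum_{i\in A}e_iT_i$, $\underline{x}_A=\sum_{i\in A}e_ix_i$, $\underline{S}_A=\frac12([\underline{x}_A,\underline{D}_A]-1)$, $\Gamma_A=\underline{S}_A\prod_{i\in A}r_i$ (empty sums $0$, empty products $1$); note $\Gamma_{\{k\}}=\mu_k$.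 $\{X,Y\}=XY+YX$. *)

theory Defs
  imports Complex_Main
begin

text \<open>
  A polynomial with values in V is encoded by its coefficient map:
  a function c from multi-indices (alpha :: nat => nat, variable x_i corresponds to index i,
  i in {1..n}) to V, representing sum_alpha x^alpha (x) c(alpha).  The space P(R^n) (x) V is
  the set of such maps with finite support and with alpha k = 0 for k outside {1..n}
  (see poly_space).
\<close>

type_synonym 'v pv = "(nat \<Rightarrow> nat) \<Rightarrow> 'v"
type_synonym 'v op = "'v pv \<Rightarrow> 'v pv"

definition poly_space :: "nat \<Rightarrow> ('v::real_vector) pv set" where
  "poly_space n = {f. finite {\<alpha>. f \<alpha> \<noteq> 0} \<and>
                      (\<forall>\<alpha>. f \<alpha> \<noteq> 0 \<longrightarrow> (\<forall>k. k \<notin> {1..n} \<longrightarrow> \<alpha> k = 0))}"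

definition clifford_module :: "nat \<Rightarrow> (nat \<Rightarrow> 'v::real_vector \<Rightarrow> 'v) \<Rightarrow> bool" where
  "clifford_module n e \<longleftrightarrow> (\<forall>i\<in>{1..n}. linear (e i)) \<and>
     (\<forall>i\<in>{1..n}. \<forall>j\<in>{1..n}. \<forall>v. e i (e j v) + e j (e i v) = (if i = j then (-2) *\<^sub>R v else 0))"

definition op_plus :: "('v::real_vector) op \<Rightarrow> 'v op \<Rightarrow> 'v op" where
  "op_plus A B = (\<lambda>f \<alpha>. A f \<alpha> + B f \<alpha>)"
definition op_minus :: "('v::real_vector) op \<Rightarrow> 'v op \<Rightarrow> 'v op" where
  "op_minus A B = (\<lambda>f \<alpha>. A f \<alpha> - B f \<alpha>)"
definition op_scale :: "real \<Rightarrow> ('v::real_vector) op \<Rightarrow> 'v op" where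
  "op_scale c A = (\<lambda>f \<alpha>. c *\<^sub>R A f \<alpha>)"
definition commutator :: "('v::real_vector) op \<Rightarrow> 'v op \<Rightarrow> 'v op" where
  "commutator A B = op_minus (A \<circ> B) (B \<circ> A)"
definition anticommutator :: "('v::real_vector) op \<Rightarrow> 'v op \<Rightarrow> 'v op" where
  "anticommutator A B = op_plus (A \<circ> B) (B \<circ> A)"

text \<open>Multiplication by x_i, reflection r_i, partial derivative, and division by x_i
  (the latter is exact division on the image of 1 - r_i, where all coefficients with
  alpha_i = 0 vanish).\<close>
definition mulx :: "nat \<Rightarrow> ('v::real_vector) op" where
  "mulx i f \<alpha> = (if \<alpha> i = 0 then 0 else f (\<alpha>(i := \<alpha> i - 1)))"
definition refl :: "nat \<Rightarrow> ('v::real_vector) op" where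
  "refl i f \<alpha> = ((-1) ^ (\<alpha> i)) *\<^sub>R f \<alpha>"
definition pderiv_op :: "nat \<Rightarrow> ('v::real_vector) op" where
  "pderiv_op i f \<alpha> = real (\<alpha> i + 1) *\<^sub>R f (\<alpha>(i := \<alpha> i + 1))"
definition divx :: "nat \<Rightarrow> ('v::real_vector) op" where
  "divx i f \<alpha> = f (\<alpha>(i := \<alpha> i + 1))"

definition dunkl :: "(nat \<Rightarrow> real) \<Rightarrow> nat \<Rightarrow> ('v::real_vector) op" where
  "dunkl \<mu> i = op_plus (pderiv_op i) (op_scale (\<mu> i) (divx i \<circ> op_minus id (refl i)))"

definition cliff :: "(nat \<Rightarrow> 'v \<Rightarrow> 'v) \<Rightarrow> nat \<Rightarrow> ('v::real_vector) op" where
  "cliff e i f \<alpha> = e i (f \<alpha>)"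

definition dirac :: "(nat \<Rightarrow> real) \<Rightarrow> (nat \<Rightarrow> 'v \<Rightarrow> 'v) \<Rightarrow> nat set \<Rightarrow> ('v::real_vector) op" where
  "dirac \<mu> e A = (\<lambda>f \<alpha>. \<Sum>i\<in>A. (cliff e i \<circ> dunkl \<mu> i) f \<alpha>)"

definition xvec :: "(nat \<Rightarrow> 'v \<Rightarrow> 'v) \<Rightarrow> nat set \<Rightarrow> ('v::real_vector) op" where
  "xvec e A = (\<lambda>f \<alpha>. \<Sum>i\<in>A. (cliff e i \<circ> mulx i) f \<alpha>)"

definition S_op :: "(nat \<Rightarrow> real) \<Rightarrow> (nat \<Rightarrow> 'v \<Rightarrow> 'v) \<Rightarrow> nat set \<Rightarrow> ('v::real_vector) op" where
  "S_op \<mu> e A = op_scale (1/2) (op_minus (commutator (xvec e A) (dirac \<mu> e A)) id)"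

text \<open>Product of the reflections r_i, i in A (in increasing order; they commute).\<close>
definition refl_prod :: "nat set \<Rightarrow> ('v::real_vector) op" where
  "refl_prod A = foldr (\<lambda>i g. refl i \<circ> g) (sorted_list_of_set A) id"

definition Gamma :: "(nat \<Rightarrow> real) \<Rightarrow> (nat \<Rightarrow> 'v \<Rightarrow> 'v) \<Rightarrow> nat set \<Rightarrow> ('v::real_vector) op" where
  "Gamma \<mu> e A = S_op \<mu> e A \<circ> refl_prod A"

text \<open>K^{+-}_l, with the sign +- encoded by s in {1, -1}.\<close>
definition K_op :: "(nat \<Rightarrow> real) \<Rightarrow> (nat \<Rightarrow> 'v \<Rightarrow> 'v) \<Rightarrow> real \<Rightarrow> nat \<Rightarrow> ('v::real_vector) op" where
  "K_op \<mu> e s l =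
     op_minus
       (op_plus (Gamma \<mu> e {l+1, l+2}) (op_scale s (Gamma \<mu> e ({1..l+2} - {l+1})))
        \<circ> op_minus (Gamma \<mu> e {1..l+1}) (op_scale (s/2) id))
       (op_plus (Gamma \<mu> e {l+2}) (op_scale s (Gamma \<mu> e {1..l+2}))
        \<circ> op_plus (Gamma \<mu> e {1..l}) (op_scale s (Gamma \<mu> e {l+1})))"

end

theory Submission
  imports Defs
begin


definition lin :: "('v::real_vector) op \<Rightarrow> bool" where
 "lin A \<longleftrightarrow> (\<forall>f g. A (\<lambda>\<alpha>. f \<alpha> + g \<alpha>) = (\<lambda>\<alpha>. A f \<alpha> + A g \<alpha>)) \<and> (\<forall>c f. A (\<lambda>\<alpha>. c *\<^sub>R f \<alpha>) = (\<lambda>\<alpha>. c *\<^sub>R A f \<alpha>))"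

lemma linD1: "lin A \<Longrightarrow> A (\<lambda>\<alpha>. f \<alpha> + g \<alpha>) = (\<lambda>\<alpha>. A f \<alpha> + A g \<alpha>)"
  by (simp add: lin_def)
lemma linD2: "lin A \<Longrightarrow> A (\<lambda>\<alpha>. c *\<^sub>R f \<alpha>) = (\<lambda>\<alpha>. c *\<^sub>R A f \<alpha>)"
  by (simp add: lin_def)
lemma linD0: "lin A \<Longrightarrow> A (\<lambda>\<alpha>. 0) = (\<lambda>\<alpha>. 0)"
  using linD2[of A 0 "\<lambda>\<alpha>. 0"] by simp
lemma linDm: "lin A \<Longrightarrow> A (\<lambda>\<alpha>. - f \<alpha>) = (\<lambda>\<alpha>. - A f \<alpha>)"
  using linD2[of A "-1" f] by simp
lemma linDd: "lin A \<Longrightarrow> A (\<lambda>\<alpha>. f \<alpha> - g \<alpha>) = (\<lambda>\<alpha>. A f \<alpha> - A g \<alpha>)"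
proof -
  assume a: "lin A"
  have "A (\<lambda>\<alpha>. f \<alpha> - g \<alpha>) = A (\<lambda>\<alpha>. f \<alpha> + (\<lambda>\<alpha>. - g \<alpha>) \<alpha>)" by simp
  also have "\<dots> = (\<lambda>\<alpha>. A f \<alpha> + A (\<lambda>\<alpha>. - g \<alpha>) \<alpha>)" by (rule linD1[OF a])
  finally show ?thesis using linDm[OF a, of g] by simp
qed

typedef (overloaded) ('v::real_vector) lop = "{A :: 'v op. lin A}"
  morphisms rep abs
  by (rule exI[of _ id]) (simp add: lin_def)

setup_lifting type_definition_lop

instantiation lop :: (real_vector) "{ring,monoid_mult}"
begin
lift_definition zero_lop :: "'a lop" is "\<lambda>f \<alpha>. 0" by (simp add: lin_def)
lift_definition one_lop :: "'a lop" is "id" by (simp add: lin_def)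
lift_definition plus_lop :: "'a lop \<Rightarrow> 'a lop \<Rightarrow> 'a lop" is "\<lambda>A B f \<alpha>. A f \<alpha> + B f \<alpha>"
  by (simp add: lin_def scaleR_add_right algebra_simps)
lift_definition uminus_lop :: "'a lop \<Rightarrow> 'a lop" is "\<lambda>A f \<alpha>. - A f \<alpha>"
  by (simp add: lin_def algebra_simps)
lift_definition minus_lop :: "'a lop \<Rightarrow> 'a lop \<Rightarrow> 'a lop" is "\<lambda>A B f \<alpha>. A f \<alpha> - B f \<alpha>"
  by (simp add: lin_def algebra_simps)
lift_definition times_lop :: "'a lop \<Rightarrow> 'a lop \<Rightarrow> 'a lop" is "\<lambda>A B. A \<circ> B"
  by (simp add: lin_def)
instance
  apply intro_classes
  apply (transfer; auto simp: linD1 linD0 algebra_simps comp_def fun_eq_iff)+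
  done

end

lemma rep_times: "rep (a * b) = rep a \<circ> rep b" by transfer simp
lemma rep_plus: "rep (a + b) = (\<lambda>f \<alpha>. rep a f \<alpha> + rep b f \<alpha>)" by transfer simp
lemma rep_minus: "rep (a - b) = (\<lambda>f \<alpha>. rep a f \<alpha> - rep b f \<alpha>)" by transfer simp
lemma rep_uminus: "rep (- a) = (\<lambda>f \<alpha>. - rep a f \<alpha>)" by transfer simp
lemma rep_zero: "rep 0 = (\<lambda>f \<alpha>. 0)" by transfer simp
lemma rep_one: "rep 1 = id" by transfer simp
lemma rep_lin: "lin (rep a)" using rep by auto
lemma lop_eqI: "(\<And>f \<alpha>. rep a f \<alpha> = rep b f \<alpha>) \<Longrightarrow> a = b"
  by (metis rep_inject ext)
lemma rep_sum: "rep (sum a X) = (\<lambda>f \<alpha>. \<Sum>i\<in>X. rep (a i) f \<alpha>)"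
  by (induction X rule: infinite_finite_induct) (auto simp: rep_zero rep_plus)


definition cT :: "(nat \<Rightarrow> real) \<Rightarrow> nat \<Rightarrow> nat \<Rightarrow> real" where
  "cT \<mu> i k = real (k + 1) + (if even k then 2 * \<mu> i else 0)"

lemma dunkl_eq: "dunkl \<mu> i f \<alpha> = cT \<mu> i (\<alpha> i) *\<^sub>R f (\<alpha>(i := \<alpha> i + 1))"
  by (simp add: dunkl_def op_plus_def op_scale_def pderiv_op_def divx_def op_minus_def refl_def
        cT_def algebra_simps scaleR_add_left[symmetric] scaleR_diff_left[symmetric]
        del: scaleR_add_left scaleR_diff_left)

lemma refl_prod_eq: "refl_prod X f \<alpha> = (-1) ^ (\<Sum>k\<in>X. \<alpha> k) *\<^sub>R f \<alpha>"
proof -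
  have "\<And>L. foldr (\<lambda>i g. refl i \<circ> g) L id f \<alpha> = (-1) ^ (sum_list (map \<alpha> L)) *\<^sub>R f \<alpha>" for f
  proof -
    fix L show "foldr (\<lambda>i g. refl i \<circ> g) L id f \<alpha> = (-1) ^ (sum_list (map \<alpha> L)) *\<^sub>R f \<alpha>"
      by (induction L arbitrary: f) (auto simp: refl_def power_add)
  qed
  moreover have "sum \<alpha> X = sum_list (map \<alpha> (sorted_list_of_set X))"
    by (cases "finite X") (auto simp: sum.distinct_set_conv_list[symmetric])
  ultimately show ?thesis by (simp add: refl_prod_def)
qed

lemma lin_mulx: "lin (mulx i)" by (auto simp: lin_def mulx_def fun_eq_iff)
lemma lin_refl: "lin (refl i)" by (auto simp: lin_def refl_def fun_eq_iff algebra_simps)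
lemma lin_dunkl: "lin (dunkl \<mu> i)" by (auto simp: lin_def dunkl_eq fun_eq_iff algebra_simps)
lemma lin_refl_prod: "lin (refl_prod X)" by (auto simp: lin_def refl_prod_eq fun_eq_iff algebra_simps)
lemma lin_cliff: "linear (e i) \<Longrightarrow> lin (cliff e i)"
  by (auto simp: lin_def cliff_def fun_eq_iff linear_add linear_scale)
lemma lin_sc: "lin (\<lambda>f \<alpha>. c *\<^sub>R f \<alpha>)" by (auto simp: lin_def fun_eq_iff algebra_simps)

definition Mx :: "nat \<Rightarrow> 'v::real_vector lop" where "Mx i = abs (mulx i)"
definition Rf :: "nat \<Rightarrow> 'v::real_vector lop" where "Rf i = abs (refl i)"
definition Tm :: "(nat \<Rightarrow> real) \<Rightarrow> nat \<Rightarrow> 'v::real_vector lop" where "Tm \<mu> i = abs (dunkl \<mu> i)"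
definition Rp :: "nat set \<Rightarrow> 'v::real_vector lop" where "Rp X = abs (refl_prod X)"
definition Em :: "(nat \<Rightarrow> 'v \<Rightarrow> 'v) \<Rightarrow> nat \<Rightarrow> 'v::real_vector lop" where "Em e i = abs (cliff e i)"
definition sc :: "real \<Rightarrow> 'v::real_vector lop" where "sc c = abs (\<lambda>f \<alpha>. c *\<^sub>R f \<alpha>)"

lemma rep_Mx: "rep (Mx i) f \<alpha> = (if \<alpha> i = 0 then 0 else f (\<alpha>(i := \<alpha> i - 1)))"
  by (simp add: Mx_def abs_inverse lin_mulx mulx_def)
lemma rep_Rf: "rep (Rf i) f \<alpha> = ((-1) ^ (\<alpha> i)) *\<^sub>R f \<alpha>"
  by (simp add: Rf_def abs_inverse lin_refl refl_def)
lemma rep_Tm: "rep (Tm \<mu> i) f \<alpha> = cT \<mu> i (\<alpha> i) *\<^sub>R f (\<alpha>(i := \<alpha> i + 1))"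
  by (simp add: Tm_def abs_inverse lin_dunkl dunkl_eq)
lemma rep_Rp: "rep (Rp X) f \<alpha> = (-1) ^ (\<Sum>k\<in>X. \<alpha> k) *\<^sub>R f \<alpha>"
  by (simp add: Rp_def abs_inverse lin_refl_prod refl_prod_eq)
lemma rep_Em: "linear (e i) \<Longrightarrow> rep (Em e i) f \<alpha> = e i (f \<alpha>)"
  by (simp add: Em_def abs_inverse lin_cliff cliff_def)
lemma rep_sc: "rep (sc c) f \<alpha> = c *\<^sub>R f \<alpha>"
  by (simp add: sc_def abs_inverse lin_sc)

lemmas rep_simps = rep_times rep_plus rep_minus rep_uminus rep_zero rep_one
   rep_Mx rep_Rf rep_Tm rep_Rp rep_sc

lemma rep_app_simps: "rep (a * b) f \<alpha> = rep a (rep b f) \<alpha>"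
  "rep (a + b) f \<alpha> = rep a f \<alpha> + rep b f \<alpha>"
  "rep (a - b) f \<alpha> = rep a f \<alpha> - rep b f \<alpha>"
  "rep (- a) f \<alpha> = - rep a f \<alpha>"
  "rep 0 f \<alpha> = 0" "rep 1 f \<alpha> = f \<alpha>"
  by (simp_all add: rep_simps)

lemma rep_sc_fun: "rep (sc c) f = (\<lambda>\<alpha>. c *\<^sub>R f \<alpha>)"
  by (simp add: rep_sc fun_eq_iff)
lemma sc_central: "sc c * a = a * sc c"
  by (rule lop_eqI) (simp add: rep_app_simps rep_sc rep_sc_fun linD2[OF rep_lin])
lemma sc_mult: "sc c * sc d = sc (c * d)"
  by (rule lop_eqI) (simp add: rep_app_simps rep_sc)
lemma sc_add: "sc c + sc d = sc (c + d)"
  by (rule lop_eqI) (simp add: rep_app_simps rep_sc algebra_simps)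
lemma sc_one: "sc 1 = 1" by (rule lop_eqI) (simp add: rep_app_simps rep_sc)
lemma sc_zero: "sc 0 = 0" by (rule lop_eqI) (simp add: rep_app_simps rep_sc)
lemma sc_uminus: "sc (- c) = - sc c" by (rule lop_eqI) (simp add: rep_app_simps rep_sc)

lemma pow_m1: "0 < k \<Longrightarrow> (-1::real) ^ k = - ((-1) ^ (k - 1))"
  by (cases k) auto

lemma MM: "Mx i * Mx j = (Mx j * Mx i :: 'v::real_vector lop)"
  by (rule lop_eqI) (auto simp: rep_app_simps rep_Mx fun_upd_twist)

lemma MT: "i \<noteq> j \<Longrightarrow> Mx i * Tm \<mu> j = (Tm \<mu> j * Mx i :: 'v::real_vector lop)"
  by (rule lop_eqI) (auto simp: rep_app_simps rep_Mx rep_Tm fun_upd_twist)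

lemma TT: "i \<noteq> j \<Longrightarrow> Tm \<mu> i * Tm \<mu> j = (Tm \<mu> j * Tm \<mu> i :: 'v::real_vector lop)"
  by (rule lop_eqI) (auto simp: rep_app_simps rep_Tm fun_upd_twist)

lemma EM: "linear (e i) \<Longrightarrow> Em e i * Mx j = Mx j * Em e i"
  by (rule lop_eqI) (auto simp: rep_app_simps rep_Mx rep_Em linear_0)

lemma ET: "linear (e i) \<Longrightarrow> Em e i * Tm \<mu> j = Tm \<mu> j * Em e i"
  by (rule lop_eqI) (auto simp: rep_app_simps rep_Tm rep_Em linear_scale)

lemma ERp: "linear (e i) \<Longrightarrow> Em e i * Rp X = Rp X * Em e i"
  by (rule lop_eqI) (auto simp: rep_app_simps rep_Rp rep_Em linear_scale)

lemma EE: "clifford_module n e \<Longrightarrow> i \<in> {1..n} \<Longrightarrow> j \<in> {1..n} \<Longrightarrow>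
   Em e i * Em e j + Em e j * Em e i = (if i = j then - (1 + 1) else 0)"
  unfolding clifford_module_def
  by (rule lop_eqI) (auto simp: rep_app_simps rep_Em scaleR_2)

lemma RM: "Rf i * Mx i = - (Mx i * Rf i :: 'v::real_vector lop)"
  by (rule lop_eqI) (auto simp: rep_app_simps rep_Mx rep_Rf pow_m1)

lemma RT: "Rf i * Tm \<mu> i = - (Tm \<mu> i * Rf i :: 'v::real_vector lop)"
  by (rule lop_eqI) (auto simp: rep_app_simps rep_Tm rep_Rf)

lemma TMcomm: "Tm \<mu> i * Mx i - Mx i * Tm \<mu> i = 1 + sc (2 * \<mu> i) * (Rf i :: 'v::real_vector lop)"
  by (rule lop_eqI) (auto simp: rep_app_simps rep_Mx rep_Tm rep_Rf rep_sc cT_def algebra_simps)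


lemma twice_cancel: "(a::'v::real_vector) + a = b + b \<Longrightarrow> a = b"
proof -
  assume h: "a + a = b + b"
  have "(2::real) *\<^sub>R a = 2 *\<^sub>R b" using h by (simp add: scaleR_2)
  then show ?thesis by simp
qed

lemma EEsame: "clifford_module n e \<Longrightarrow> i \<in> {1..n} \<Longrightarrow> Em e i * Em e i = - 1"
  unfolding clifford_module_def
proof (rule lop_eqI)
  fix f :: "'a pv" and \<alpha>
  assume cm: "(\<forall>i\<in>{1..n}. linear (e i)) \<and> (\<forall>i\<in>{1..n}. \<forall>j\<in>{1..n}. \<forall>v. e i (e j v) + e j (e i v) = (if i = j then (-2) *\<^sub>R v else 0))"
    and i: "i \<in> {1..n}"
  have "e i (e i (f \<alpha>)) + e i (e i (f \<alpha>)) = (- f \<alpha>) + (- f \<alpha>)"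
    using cm i by (simp add: scaleR_2)
  then have "e i (e i (f \<alpha>)) = - f \<alpha>" by (rule twice_cancel)
  then show "rep (Em e i * Em e i) f \<alpha> = rep (- 1) f \<alpha>"
    using cm i by (simp add: rep_app_simps rep_Em)
qed

lemma EEdiff: "clifford_module n e \<Longrightarrow> i \<in> {1..n} \<Longrightarrow> j \<in> {1..n} \<Longrightarrow> i \<noteq> j \<Longrightarrow>
   Em e i * Em e j = - (Em e j * Em e i)"
  using EE[of n e i j] by (simp add: eq_neg_iff_add_eq_0)

lemma sum_upd: "finite X \<Longrightarrow> (\<Sum>k\<in>X. if k = i then v else \<alpha> k) = (if i \<in> X then v + (\<Sum>k\<in>X - {i}. \<alpha> k) else (\<Sum>k\<in>X. \<alpha> k))"
  by (auto simp: sum.remove intro!: sum.cong)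

lemma sum_rem: "finite X \<Longrightarrow> i \<in> X \<Longrightarrow> (\<Sum>k\<in>X. \<alpha> k) = \<alpha> i + (\<Sum>k\<in>X - {i}. \<alpha> k)"
  by (simp add: sum.remove)

lemma RpM: "finite X \<Longrightarrow> Rp X * Mx i = (if i \<in> X then - (Mx i * Rp X) else (Mx i * Rp X :: 'v::real_vector lop))"
proof (cases "i \<in> X")
  case True
  assume fX: "finite X"
  have "Rp X * Mx i = - (Mx i * Rp X :: 'v lop)"
  proof (rule lop_eqI)
    fix f :: "'v pv" and \<alpha>
    show "rep (Rp X * Mx i) f \<alpha> = rep (- (Mx i * Rp X)) f \<alpha>"
    proof (cases "\<alpha> i = 0")
      case False
      then have "(-1::real) ^ (\<alpha> i + (\<Sum>k\<in>X - {i}. \<alpha> k)) = - ((-1) ^ ((\<alpha> i - 1) + (\<Sum>k\<in>X - {i}. \<alpha> k)))"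
        using pow_m1[of "\<alpha> i + (\<Sum>k\<in>X - {i}. \<alpha> k)"] by simp
      then show ?thesis using False True fX
        by (simp add: rep_app_simps rep_Mx rep_Rp sum_upd sum_rem[OF fX True])
    qed (simp add: rep_app_simps rep_Mx rep_Rp)
  qed
  then show ?thesis using True by simp
next
  case False
  assume fX: "finite X"
  have "Rp X * Mx i = (Mx i * Rp X :: 'v lop)"
    by (rule lop_eqI) (simp add: rep_app_simps rep_Mx rep_Rp sum_upd fX False)
  then show ?thesis using False by simp
qed

lemma RpT: "finite X \<Longrightarrow> Rp X * Tm \<mu> i = (if i \<in> X then - (Tm \<mu> i * Rp X) else (Tm \<mu> i * Rp X :: 'v::real_vector lop))"
proof (cases "i \<in> X")
  case True
  assume fX: "finite X"
  have "Rp X * Tm \<mu> i = - (Tm \<mu> i * Rp X :: 'v lop)"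
    by (rule lop_eqI) (simp add: rep_app_simps rep_Tm rep_Rp sum_upd sum_rem[OF fX True] fX True)
  then show ?thesis using True by simp
next
  case False
  assume fX: "finite X"
  have "Rp X * Tm \<mu> i = (Tm \<mu> i * Rp X :: 'v lop)"
    by (rule lop_eqI) (simp add: rep_app_simps rep_Tm rep_Rp sum_upd fX False)
  then show ?thesis using False by simp
qed

lemma RpRp: "finite X \<Longrightarrow> finite Y \<Longrightarrow> X \<inter> Y = {} \<Longrightarrow> Rp X * Rp Y = (Rp (X \<union> Y) :: 'v::real_vector lop)"
  by (rule lop_eqI) (simp add: rep_app_simps rep_Rp sum.union_disjoint power_add)

lemma RpRp_same: "Rp X * Rp X = (1 :: 'v::real_vector lop)"
  by (rule lop_eqI) (simp add: rep_app_simps rep_Rp power_add[symmetric])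

lemma TMcomm': "Tm \<mu> i * Mx i = Mx i * Tm \<mu> i + 1 + sc (2 * \<mu> i) * (Rf i :: 'v::real_vector lop)"
  using TMcomm[of \<mu> i] by (simp add: algebra_simps)

lemma TMM: "Tm \<mu> i * (Mx i * Mx i) - Mx i * (Mx i * Tm \<mu> i) = Mx i + (Mx i :: 'v::real_vector lop)"
proof -
  let ?T = "Tm \<mu> i :: 'v lop" and ?M = "Mx i :: 'v lop" and ?R = "Rf i :: 'v lop" and ?c = "sc (2 * \<mu> i) :: 'v lop"
  have "?T * (?M * ?M) = (?T * ?M) * ?M" by (simp only: mult.assoc)
  also have "\<dots> = (?M * ?T + 1 + ?c * ?R) * ?M" by (simp only: TMcomm')
  also have "\<dots> = ?M * (?T * ?M) + ?M + ?c * (?R * ?M)" by (simp only: distrib_right mult.assoc mult_1_left)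
  also have "\<dots> = ?M * (?M * ?T + 1 + ?c * ?R) + ?M + ?c * (?R * ?M)" by (simp only: TMcomm')
  also have "?M * (?M * ?T + 1 + ?c * ?R) = ?M * (?M * ?T) + ?M + ?M * (?c * ?R)" by (simp only: distrib_left mult_1_right)
  also have "?M * (?c * ?R) = ?c * (?M * ?R)" by (metis mult.assoc sc_central)
  finally have "?T * (?M * ?M) = ?M * (?M * ?T) + ?M + ?c * (?M * ?R) + ?M + ?c * (?R * ?M)" .
  then show ?thesis by (simp add: RM)
qed

lemma TTM: "Tm \<mu> i * (Tm \<mu> i * Mx i) - Mx i * (Tm \<mu> i * Tm \<mu> i) = Tm \<mu> i + (Tm \<mu> i :: 'v::real_vector lop)"
proof -
  let ?T = "Tm \<mu> i :: 'v lop" and ?M = "Mx i :: 'v lop" and ?R = "Rf i :: 'v lop" and ?c = "sc (2 * \<mu> i) :: 'v lop"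
  have "?T * (?T * ?M) = ?T * (?M * ?T + 1 + ?c * ?R)" by (simp only: TMcomm')
  also have "\<dots> = (?T * ?M) * ?T + ?T + ?T * (?c * ?R)" by (simp only: distrib_left mult_1_right mult.assoc)
  also have "\<dots> = (?M * ?T + 1 + ?c * ?R) * ?T + ?T + ?T * (?c * ?R)" by (simp only: TMcomm')
  also have "\<dots> = ?M * (?T * ?T) + ?T + ?c * (?R * ?T) + ?T + ?T * (?c * ?R)" by (simp only: distrib_right mult.assoc mult_1_left)
  also have "?T * (?c * ?R) = ?c * (?T * ?R)" by (metis mult.assoc sc_central)
  finally have "?T * (?T * ?M) = ?M * (?T * ?T) + ?T + ?c * (?R * ?T) + ?T + ?c * (?T * ?R)" .
  then show ?thesis by (simp add: RT)
qed


definition comm :: "'a::ring \<Rightarrow> 'a \<Rightarrow> bool" where "comm a b \<longleftrightarrow> a * b = b * a"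
definition acomm :: "'a::ring \<Rightarrow> 'a \<Rightarrow> bool" where "acomm a b \<longleftrightarrow> a * b = - (b * a)"

lemma comm_sym: "comm a b \<Longrightarrow> comm b a" by (simp add: comm_def)
lemma acomm_sym: "acomm a b \<Longrightarrow> acomm b a" by (simp add: acomm_def)
lemma comm_refl: "comm a a" by (simp add: comm_def)
lemma comm_one: "comm a (1::'a::{ring,monoid_mult})" by (simp add: comm_def)
lemma comm_zero: "comm a 0" by (simp add: comm_def)
lemma comm_add: "comm a b \<Longrightarrow> comm a c \<Longrightarrow> comm a (b + c)" by (simp add: comm_def algebra_simps)
lemma comm_diff: "comm a b \<Longrightarrow> comm a c \<Longrightarrow> comm a (b - c)" by (simp add: comm_def algebra_simps)
lemma comm_uminus: "comm a b \<Longrightarrow> comm a (- b)" by (simp add: comm_def algebra_simps)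
lemma comm_mult: "comm a b \<Longrightarrow> comm a c \<Longrightarrow> comm a (b * c)"
  by (simp add: comm_def) (metis mult.assoc)
lemma comm_mult_aa: "acomm a b \<Longrightarrow> acomm a c \<Longrightarrow> comm a (b * c)"
  by (simp add: comm_def acomm_def) (metis mult.assoc mult_minus_left mult_minus_right minus_minus)
lemma acomm_mult_ca: "comm a b \<Longrightarrow> acomm a c \<Longrightarrow> acomm a (b * c)"
  by (simp add: comm_def acomm_def) (metis mult.assoc mult_minus_left mult_minus_right)
lemma acomm_mult_ac: "acomm a b \<Longrightarrow> comm a c \<Longrightarrow> acomm a (b * c)"
  by (simp add: comm_def acomm_def) (metis mult.assoc mult_minus_left mult_minus_right)
lemma acomm_add: "acomm a b \<Longrightarrow> acomm a c \<Longrightarrow> acomm a (b + c)" by (simp add: acomm_def algebra_simps)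
lemma acomm_uminus: "acomm a b \<Longrightarrow> acomm a (- b)" by (simp add: acomm_def algebra_simps)
lemma comm_sum: "(\<And>i. i \<in> X \<Longrightarrow> comm a (f i)) \<Longrightarrow> comm a (sum f X)"
  by (induction X rule: infinite_finite_induct) (auto intro: comm_add comm_zero)
lemma acomm_sum: "(\<And>i. i \<in> X \<Longrightarrow> acomm a (f i)) \<Longrightarrow> acomm a (sum f X)"
  by (induction X rule: infinite_finite_induct) (auto simp: acomm_def distrib_left distrib_right)
lemma comm_sc: "comm (sc c) a" by (simp add: comm_def sc_central)

lemma comm_multL: "comm b a \<Longrightarrow> comm c a \<Longrightarrow> comm (b * c) a"
  by (meson comm_mult comm_sym)
lemma comm_multL_aa: "acomm b a \<Longrightarrow> acomm c a \<Longrightarrow> comm (b * c) a"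
  by (meson comm_mult_aa comm_sym acomm_sym)
lemma acomm_multL_ca: "comm b a \<Longrightarrow> acomm c a \<Longrightarrow> acomm (b * c) a"
  by (meson acomm_mult_ca comm_sym acomm_sym)
lemma acomm_multL_ac: "acomm b a \<Longrightarrow> comm c a \<Longrightarrow> acomm (b * c) a"
  by (meson acomm_mult_ac comm_sym acomm_sym)

lemma diag_sum: "finite X \<Longrightarrow> (\<And>i j. i \<in> X \<Longrightarrow> j \<in> X \<Longrightarrow> i \<noteq> j \<Longrightarrow> c i j = (0::'a::comm_monoid_add))
   \<Longrightarrow> (\<Sum>i\<in>X. \<Sum>j\<in>X. c i j) = (\<Sum>i\<in>X. c i i)"
proof (rule sum.cong[OF refl])
  fix i assume f: "finite X" and z: "\<And>i j. i \<in> X \<Longrightarrow> j \<in> X \<Longrightarrow> i \<noteq> j \<Longrightarrow> c i j = 0" and i: "i \<in> X"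
  have "(\<Sum>j\<in>X. c i j) = c i i + (\<Sum>j\<in>X - {i}. c i j)" using f i by (simp add: sum.remove)
  also have "(\<Sum>j\<in>X - {i}. c i j) = 0" using z i by (auto intro!: sum.neutral)
  finally show "(\<Sum>j\<in>X. c i j) = c i i" by simp
qed

lemma anti_sum_expand: "finite X \<Longrightarrow> sum (a::_\<Rightarrow>'a::ring) X * sum b X + sum b X * sum a X
   = (\<Sum>i\<in>X. \<Sum>j\<in>X. a i * b j + b j * a i)"
  by (simp add: sum_product sum.distrib sum.swap[of "\<lambda>i j. b i * a j"])

lemma comm_sum_expand: "finite X \<Longrightarrow> sum (a::_\<Rightarrow>'a::ring) X * sum b X - sum b X * sum a X
   = (\<Sum>i\<in>X. \<Sum>j\<in>X. a i * b j - b j * a i)"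
  by (simp add: sum_product sum_subtractf sum.swap[of "\<lambda>i j. b i * a j"])


locale dd =
  fixes n :: nat and \<mu> :: "nat \<Rightarrow> real" and e :: "nat \<Rightarrow> 'v::real_vector \<Rightarrow> 'v"
  assumes cm: "clifford_module n e"
begin

lemma lin_e: "i \<in> {1..n} \<Longrightarrow> linear (e i)" using cm by (simp add: clifford_module_def)

abbreviation E :: "nat \<Rightarrow> 'v lop" where "E i \<equiv> Em e i"
abbreviation M :: "nat \<Rightarrow> 'v lop" where "M i \<equiv> Mx i"
abbreviation T :: "nat \<Rightarrow> 'v lop" where "T i \<equiv> Tm \<mu> i"

definition xi :: "nat set \<Rightarrow> 'v lop" where "xi X = (\<Sum>i\<in>X. E i * M i)"
definition de :: "nat set \<Rightarrow> 'v lop" where "de X = (\<Sum>i\<in>X. E i * T i)"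
definition hf :: "'v lop" where "hf = sc (1/2)"
definition SS :: "nat set \<Rightarrow> 'v lop" where "SS X = hf * (xi X * de X - de X * xi X - 1)"
definition GG :: "nat set \<Rightarrow> 'v lop" where "GG X = SS X * Rp X"

lemma hf2: "hf + hf = 1" by (simp add: hf_def sc_add sc_one)

lemma cEM: "i \<in> {1..n} \<Longrightarrow> comm (E i) (M j)" unfolding comm_def by (rule EM[OF lin_e])
lemma cET: "i \<in> {1..n} \<Longrightarrow> comm (E i) (T j)" unfolding comm_def by (rule ET[OF lin_e])
lemma cERp: "i \<in> {1..n} \<Longrightarrow> comm (E i) (Rp X)" unfolding comm_def by (rule ERp[OF lin_e])
lemma aEE: "i \<in> {1..n} \<Longrightarrow> j \<in> {1..n} \<Longrightarrow> i \<noteq> j \<Longrightarrow> acomm (E i) (E j)"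
  unfolding acomm_def by (rule EEdiff[OF cm])
lemma cMM: "comm (M i) (M j)" using MM by (simp add: comm_def)
lemma cMT: "i \<noteq> j \<Longrightarrow> comm (M i) (T j)" using MT by (simp add: comm_def)
lemma cTT: "i \<noteq> j \<Longrightarrow> comm (T i) (T j)" using TT by (simp add: comm_def)
lemma RpM_a: "finite X \<Longrightarrow> i \<in> X \<Longrightarrow> acomm (Rp X) (M i)" using RpM[of X i] by (simp add: acomm_def)
lemma RpM_c: "finite X \<Longrightarrow> i \<notin> X \<Longrightarrow> comm (Rp X) (M i)" using RpM[of X i] by (simp add: comm_def)
lemma RpT_a: "finite X \<Longrightarrow> i \<in> X \<Longrightarrow> acomm (Rp X) (T i)" using RpT[of X \<mu> i] by (simp add: acomm_def)
lemma RpT_c: "finite X \<Longrightarrow> i \<notin> X \<Longrightarrow> comm (Rp X) (T i)" using RpT[of X \<mu> i] by (simp add: comm_def)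

lemma cRpE: "i \<in> {1..n} \<Longrightarrow> comm (Rp X) (E i)" by (rule comm_sym, rule cERp)
lemma cME: "i \<in> {1..n} \<Longrightarrow> comm (M j) (E i)" by (rule comm_sym, rule cEM)
lemma cTE: "i \<in> {1..n} \<Longrightarrow> comm (T j) (E i)" by (rule comm_sym, rule cET)
lemma cTM: "i \<noteq> j \<Longrightarrow> comm (T j) (M i)" by (rule comm_sym, rule cMT)

lemma fin: "X \<subseteq> {1..n} \<Longrightarrow> finite X" by (rule finite_subset[of _ "{1..n}"]) auto

lemma a_Rp_xi: "X \<subseteq> {1..n} \<Longrightarrow> acomm (Rp X) (xi X)"
  unfolding xi_def
  by (rule acomm_sum, rule acomm_mult_ca, rule cRpE, blast, rule RpM_a[OF fin], auto)
lemma a_Rp_de: "X \<subseteq> {1..n} \<Longrightarrow> acomm (Rp X) (de X)"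
  unfolding de_def
  by (rule acomm_sum, rule acomm_mult_ca, rule cRpE, blast, rule RpT_a[OF fin], auto)
lemma c_Rp_xi: "X \<subseteq> {1..n} \<Longrightarrow> Y \<subseteq> {1..n} \<Longrightarrow> X \<inter> Y = {} \<Longrightarrow> comm (Rp X) (xi Y)"
  unfolding xi_def
  by (rule comm_sum, rule comm_mult, rule cRpE, blast, rule RpM_c[OF fin], auto)
lemma c_Rp_de: "X \<subseteq> {1..n} \<Longrightarrow> Y \<subseteq> {1..n} \<Longrightarrow> X \<inter> Y = {} \<Longrightarrow> comm (Rp X) (de Y)"
  unfolding de_def
  by (rule comm_sum, rule comm_mult, rule cRpE, blast, rule RpT_c[OF fin], auto)
lemma c_Rp_Rp: "comm (Rp X) (Rp Y :: 'v lop)"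
proof -
  have "Rp X * Rp Y = (Rp Y * Rp X :: 'v lop)"
    by (rule lop_eqI) (simp add: rep_app_simps rep_Rp)
  then show ?thesis by (simp add: comm_def)
qed

lemma h_PE: "j \<in> {1..n} \<Longrightarrow> P = M i \<or> P = T i \<Longrightarrow> comm P (E j)"
  by (erule disjE) (simp_all add: cME cTE)
lemma h_EQ: "i \<in> {1..n} \<Longrightarrow> Q = M j \<or> Q = T j \<Longrightarrow> comm (E i) Q"
  by (erule disjE) (simp_all add: cEM cET)
lemma h_PQ: "i \<noteq> j \<Longrightarrow> P = M i \<or> P = T i \<Longrightarrow> Q = M j \<or> Q = T j \<Longrightarrow> comm P Q"
  by (elim disjE) (simp_all add: cMM cMT cTT cTM)

lemma a_term: "i \<in> {1..n} \<Longrightarrow> j \<in> {1..n} \<Longrightarrow> i \<noteq> j \<Longrightarrow> (P = M i \<or> P = T i) \<Longrightarrow> (Q = M j \<or> Q = T j)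
   \<Longrightarrow> acomm (E i * P) (E j * Q)"
  by (rule acomm_mult_ac[OF acomm_multL_ac[OF aEE h_PE] comm_multL[OF h_EQ h_PQ]])

lemma a_xi_xi: "X \<subseteq> {1..n} \<Longrightarrow> Y \<subseteq> {1..n} \<Longrightarrow> X \<inter> Y = {} \<Longrightarrow> acomm (xi X) (xi Y)"
  unfolding xi_def
  apply (rule acomm_sum)
  apply (rule acomm_sym)
  apply (rule acomm_sum)
  apply (rule acomm_sym)
  apply (rule a_term) apply auto[5] done
lemma a_xi_de: "X \<subseteq> {1..n} \<Longrightarrow> Y \<subseteq> {1..n} \<Longrightarrow> X \<inter> Y = {} \<Longrightarrow> acomm (xi X) (de Y)"
  unfolding xi_def de_def
  apply (rule acomm_sum)
  apply (rule acomm_sym)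
  apply (rule acomm_sum)
  apply (rule acomm_sym)
  apply (rule a_term) apply auto[5] done
lemma a_de_de: "X \<subseteq> {1..n} \<Longrightarrow> Y \<subseteq> {1..n} \<Longrightarrow> X \<inter> Y = {} \<Longrightarrow> acomm (de X) (de Y)"
  unfolding de_def
  apply (rule acomm_sum)
  apply (rule acomm_sym)
  apply (rule acomm_sum)
  apply (rule acomm_sym)
  apply (rule a_term) apply auto[5] done


lemma pt_re: "comm P (E j) \<Longrightarrow> E i * P * (E j * Q) = E i * E j * (P * Q)"
  unfolding comm_def by (metis mult.assoc)

lemma EEs: "i \<in> {1..n} \<Longrightarrow> E i * E i = -1" by (rule EEsame[OF cm])

definition Nt :: "nat \<Rightarrow> 'v lop" where "Nt i = M i * T i + T i * M i"

lemma anti_xd: assumes X: "X \<subseteq> {1..n}"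
  shows "xi X * de X + de X * xi X = - (\<Sum>i\<in>X. Nt i)"
proof -
  have "xi X * de X + de X * xi X = (\<Sum>i\<in>X. \<Sum>j\<in>X. E i * M i * (E j * T j) + E j * T j * (E i * M i))"
    unfolding xi_def de_def by (rule anti_sum_expand[OF fin[OF X]])
  also have "\<dots> = (\<Sum>i\<in>X. E i * M i * (E i * T i) + E i * T i * (E i * M i))"
  proof (rule diag_sum[OF fin[OF X]])
    fix i j assume ij: "i \<in> X" "j \<in> X" "i \<noteq> j"
    then have i: "i \<in> {1..n}" and j: "j \<in> {1..n}" using X by auto
    have "E i * M i * (E j * T j) + E j * T j * (E i * M i) = E i * E j * (M i * T j) + E j * E i * (T j * M i)"
      using pt_re[OF cME[OF j]] pt_re[OF cTE[OF i]] by simp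
    also have "E j * E i = - (E i * E j)" using EEdiff[OF cm i j ij(3)] by simp
    also have "T j * M i = M i * T j" using cTM[OF ij(3)] by (simp add: comm_def)
    finally show "E i * M i * (E j * T j) + E j * T j * (E i * M i) = 0" by simp
  qed
  also have "\<dots> = (\<Sum>i\<in>X. - Nt i)"
  proof (rule sum.cong[OF refl])
    fix i assume "i \<in> X" then have i: "i \<in> {1..n}" using X by auto
    show "E i * M i * (E i * T i) + E i * T i * (E i * M i) = - Nt i"
      using pt_re[OF cME[OF i]] pt_re[OF cTE[OF i]] EEs[OF i] by (simp add: Nt_def)
  qed
  finally show ?thesis by (simp add: sum_negf)
qed

lemma comm_addL: "comm b a \<Longrightarrow> comm c a \<Longrightarrow> comm (b + c) a"
  by (simp add: comm_def algebra_simps)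

lemma cNt_E: "i \<in> {1..n} \<Longrightarrow> comm (Nt k) (E i)"
  unfolding Nt_def by (intro comm_addL comm_multL cME cTE)
lemma cNt_M: "i \<noteq> k \<Longrightarrow> comm (Nt k) (M i)"
  unfolding Nt_def by (intro comm_addL comm_multL cMM cTM; simp)
lemma cNt_T: "i \<noteq> k \<Longrightarrow> comm (Nt k) (T i)"
  unfolding Nt_def by (intro comm_addL comm_multL cMT cTT; simp)

lemma NtM: "Nt i * M i - M i * Nt i = M i + M i"
proof -
  have "Nt i * M i - M i * Nt i = T i * (M i * M i) - M i * (M i * T i)"
    by (simp add: Nt_def algebra_simps)
  then show ?thesis using TMM by simp
qed
lemma TNt: "T i * Nt i - Nt i * T i = T i + T i"
proof -
  have "T i * Nt i - Nt i * T i = T i * (T i * M i) - M i * (T i * T i)"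
    by (simp add: Nt_def algebra_simps)
  then show ?thesis using TTM by simp
qed

lemma anti_xi_C: assumes X: "X \<subseteq> {1..n}"
  shows "xi X * (xi X * de X - de X * xi X) + (xi X * de X - de X * xi X) * xi X = xi X + xi X"
proof -
  let ?N = "\<Sum>i\<in>X. Nt i"
  have "xi X * (xi X * de X - de X * xi X) + (xi X * de X - de X * xi X) * xi X
        = xi X * (xi X * de X + de X * xi X) - (xi X * de X + de X * xi X) * xi X"
    by (simp add: algebra_simps)
  also have "\<dots> = ?N * xi X - xi X * ?N" by (simp add: anti_xd[OF X])
  also have "\<dots> = (\<Sum>k\<in>X. \<Sum>i\<in>X. Nt k * (E i * M i) - E i * M i * Nt k)"
    unfolding xi_def by (rule comm_sum_expand[OF fin[OF X]])
  also have "\<dots> = (\<Sum>k\<in>X. Nt k * (E k * M k) - E k * M k * Nt k)"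
  proof (rule diag_sum[OF fin[OF X]])
    fix k i assume ki: "k \<in> X" "i \<in> X" "k \<noteq> i"
    then have i: "i \<in> {1..n}" using X by auto
    have "comm (Nt k) (E i * M i)" by (rule comm_mult[OF cNt_E[OF i] cNt_M]) (use ki in auto)
    show "Nt k * (E i * M i) - E i * M i * Nt k = 0" using \<open>comm (Nt k) (E i * M i)\<close> by (simp add: comm_def)
  qed
  also have "\<dots> = (\<Sum>k\<in>X. E k * M k + E k * M k)"
  proof (rule sum.cong[OF refl])
    fix k assume "k \<in> X" then have k: "k \<in> {1..n}" using X by auto
    have "Nt k * (E k * M k) = E k * (Nt k * M k)"
      using cNt_E[OF k] unfolding comm_def by (metis mult.assoc)
    then have "Nt k * (E k * M k) - E k * M k * Nt k = E k * (Nt k * M k - M k * Nt k)"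
      by (simp add: algebra_simps)
    then show "Nt k * (E k * M k) - E k * M k * Nt k = E k * M k + E k * M k"
      by (simp add: NtM algebra_simps)
  qed
  finally show ?thesis by (simp add: xi_def sum.distrib)
qed

lemma anti_de_C: assumes X: "X \<subseteq> {1..n}"
  shows "de X * (xi X * de X - de X * xi X) + (xi X * de X - de X * xi X) * de X = de X + de X"
proof -
  let ?N = "\<Sum>i\<in>X. Nt i"
  have "de X * (xi X * de X - de X * xi X) + (xi X * de X - de X * xi X) * de X
        = (xi X * de X + de X * xi X) * de X - de X * (xi X * de X + de X * xi X)"
    by (simp add: algebra_simps)
  also have "\<dots> = de X * ?N - ?N * de X" by (simp add: anti_xd[OF X])
  also have "\<dots> = (\<Sum>i\<in>X. \<Sum>k\<in>X. E i * T i * Nt k - Nt k * (E i * T i))"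
    unfolding de_def by (rule comm_sum_expand[OF fin[OF X]])
  also have "\<dots> = (\<Sum>k\<in>X. E k * T k * Nt k - Nt k * (E k * T k))"
  proof (rule diag_sum[OF fin[OF X]])
    fix i k assume ki: "i \<in> X" "k \<in> X" "i \<noteq> k"
    then have i: "i \<in> {1..n}" using X by auto
    have "comm (Nt k) (E i * T i)" by (rule comm_mult[OF cNt_E[OF i] cNt_T]) (use ki in auto)
    then show "E i * T i * Nt k - Nt k * (E i * T i) = 0" by (simp add: comm_def)
  qed
  also have "\<dots> = (\<Sum>k\<in>X. E k * T k + E k * T k)"
  proof (rule sum.cong[OF refl])
    fix k assume "k \<in> X" then have k: "k \<in> {1..n}" using X by auto
    have "Nt k * (E k * T k) = E k * (Nt k * T k)"
      using cNt_E[OF k] unfolding comm_def by (metis mult.assoc)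
    then have "E k * T k * Nt k - Nt k * (E k * T k) = E k * (T k * Nt k - Nt k * T k)"
      by (simp add: algebra_simps)
    then show "E k * T k * Nt k - Nt k * (E k * T k) = E k * T k + E k * T k"
      by (simp add: TNt algebra_simps)
  qed
  finally show ?thesis by (simp add: de_def sum.distrib)
qed

end


lemma acomm_S: "a * C + C * a = a + a \<Longrightarrow> acomm (sc c * (C - 1)) (a::'v::real_vector lop)"
proof -
  assume h: "a * C + C * a = a + a"
  have 1: "a * (sc c * (C - 1)) = sc c * (a * (C - 1))" by (metis mult.assoc sc_central)
  have 2: "(C - 1) * a + a * (C - 1) = 0" using h by (simp add: algebra_simps)
  have "sc c * (C - 1) * a + a * (sc c * (C - 1)) = sc c * ((C - 1) * a + a * (C - 1))"
    by (simp only: 1 mult.assoc distrib_left)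
  also have "\<dots> = 0" using 2 by simp
  finally show ?thesis by (simp add: acomm_def eq_neg_iff_add_eq_0)
qed

lemma comm_scR: "comm a (sc c)" by (rule comm_sym, rule comm_sc)

context dd begin

lemma comm_GG_from: "comm a (xi Y) \<Longrightarrow> comm a (de Y) \<Longrightarrow> comm a (Rp Y) \<Longrightarrow> comm a (GG Y)"
  unfolding GG_def SS_def hf_def
  by (intro comm_mult comm_diff comm_scR comm_one)

lemma SS_acomm_xi: "X \<subseteq> {1..n} \<Longrightarrow> acomm (SS X) (xi X)"
  unfolding SS_def hf_def by (rule acomm_S, rule anti_xi_C)
lemma SS_acomm_de: "X \<subseteq> {1..n} \<Longrightarrow> acomm (SS X) (de X)"
  unfolding SS_def hf_def by (rule acomm_S, rule anti_de_C)

lemma Rp_comm_SS: "X \<subseteq> {1..n} \<Longrightarrow> comm (Rp X) (SS X)"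
  unfolding SS_def hf_def
  by (rule comm_mult[OF comm_scR comm_diff[OF comm_diff[OF comm_mult_aa[OF a_Rp_xi a_Rp_de] comm_mult_aa[OF a_Rp_de a_Rp_xi]] comm_one]])

lemma xiY_comm_SS: assumes "X \<subseteq> {1..n}" "Y \<subseteq> {1..n}" "X \<inter> Y = {}" shows "comm (xi Y) (SS X)"
proof -
  have YX: "Y \<inter> X = {}" using assms by auto
  have a1: "acomm (xi Y) (xi X)" by (rule a_xi_xi[OF assms(2,1) YX])
  have a2: "acomm (xi Y) (de X)" by (rule a_xi_de[OF assms(2,1) YX])
  show ?thesis unfolding SS_def hf_def
    by (rule comm_mult[OF comm_scR comm_diff[OF comm_diff[OF comm_mult_aa[OF a1 a2] comm_mult_aa[OF a2 a1]] comm_one]])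
qed
lemma deY_comm_SS: assumes "X \<subseteq> {1..n}" "Y \<subseteq> {1..n}" "X \<inter> Y = {}" shows "comm (de Y) (SS X)"
proof -
  have YX: "Y \<inter> X = {}" using assms by auto
  have a1: "acomm (de Y) (xi X)" by (rule acomm_sym[OF a_xi_de[OF assms(1,2,3)]])
  have a2: "acomm (de Y) (de X)" by (rule a_de_de[OF assms(2,1) YX])
  show ?thesis unfolding SS_def hf_def
    by (rule comm_mult[OF comm_scR comm_diff[OF comm_diff[OF comm_mult_aa[OF a1 a2] comm_mult_aa[OF a2 a1]] comm_one]])
qed
lemma RpY_comm_SS: assumes "X \<subseteq> {1..n}" "Y \<subseteq> {1..n}" "X \<inter> Y = {}" shows "comm (Rp Y) (SS X)"
proof -
  have YX: "Y \<inter> X = {}" using assms by auto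
  have a1: "comm (Rp Y) (xi X)" by (rule c_Rp_xi[OF assms(2,1) YX])
  have a2: "comm (Rp Y) (de X)" by (rule c_Rp_de[OF assms(2,1) YX])
  show ?thesis unfolding SS_def hf_def
    by (rule comm_mult[OF comm_scR comm_diff[OF comm_diff[OF comm_mult[OF a1 a2] comm_mult[OF a2 a1]] comm_one]])
qed

lemma GG_xi: "X \<subseteq> {1..n} \<Longrightarrow> comm (GG X) (xi X)"
  unfolding GG_def by (rule comm_multL_aa[OF SS_acomm_xi a_Rp_xi])
lemma GG_de: "X \<subseteq> {1..n} \<Longrightarrow> comm (GG X) (de X)"
  unfolding GG_def by (rule comm_multL_aa[OF SS_acomm_de a_Rp_de])
lemma GG_Rp: "X \<subseteq> {1..n} \<Longrightarrow> comm (GG X) (Rp X)"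
  unfolding GG_def by (rule comm_multL[OF comm_sym[OF Rp_comm_SS] c_Rp_Rp])

lemma GG_xiY: "X \<subseteq> {1..n} \<Longrightarrow> Y \<subseteq> {1..n} \<Longrightarrow> X \<inter> Y = {} \<Longrightarrow> comm (GG X) (xi Y)"
  unfolding GG_def by (rule comm_multL[OF comm_sym[OF xiY_comm_SS] c_Rp_xi])
lemma GG_deY: "X \<subseteq> {1..n} \<Longrightarrow> Y \<subseteq> {1..n} \<Longrightarrow> X \<inter> Y = {} \<Longrightarrow> comm (GG X) (de Y)"
  unfolding GG_def by (rule comm_multL[OF comm_sym[OF deY_comm_SS] c_Rp_de])
lemma GG_RpY: "comm (GG X) (Rp Y)" if "X \<subseteq> {1..n}" "Y \<subseteq> {1..n}" "X \<inter> Y = {}"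
  unfolding GG_def by (rule comm_multL[OF comm_sym[OF RpY_comm_SS[OF that]] c_Rp_Rp])

lemma RpRp1: "Rp X * Rp X = 1" by (rule RpRp_same)

lemma C_eq: "xi X * de X - de X * xi X = GG X * Rp X + GG X * Rp X + 1"
proof -
  have "GG X * Rp X = SS X" by (simp add: GG_def mult.assoc RpRp1)
  then have "GG X * Rp X + GG X * Rp X = (hf + hf) * (xi X * de X - de X * xi X - 1)"
    by (simp add: SS_def distrib_right)
  then show ?thesis by (simp add: hf2)
qed

lemma xi_union: "X \<inter> Y = {} \<Longrightarrow> X \<subseteq> {1..n} \<Longrightarrow> Y \<subseteq> {1..n} \<Longrightarrow> xi (X \<union> Y) = xi X + xi Y"
  unfolding xi_def by (rule sum.union_disjoint) (auto intro: rev_finite_subset[OF finite_atLeastAtMost])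
lemma de_union: "X \<inter> Y = {} \<Longrightarrow> X \<subseteq> {1..n} \<Longrightarrow> Y \<subseteq> {1..n} \<Longrightarrow> de (X \<union> Y) = de X + de Y"
  unfolding de_def by (rule sum.union_disjoint) (auto intro: rev_finite_subset[OF finite_atLeastAtMost])
lemma Rp_union: "X \<inter> Y = {} \<Longrightarrow> X \<subseteq> {1..n} \<Longrightarrow> Y \<subseteq> {1..n} \<Longrightarrow> Rp (X \<union> Y) = Rp X * Rp Y"
  by (rule RpRp[symmetric]) (auto intro: rev_finite_subset[OF finite_atLeastAtMost])

lemma GG_sub: assumes "X \<subseteq> Y" "Y \<subseteq> {1..n}" shows "comm (GG X) (GG Y)"
proof -
  have X: "X \<subseteq> {1..n}" and D: "Y - X \<subseteq> {1..n}" "X \<inter> (Y - X) = {}" using assms by auto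
  have Y: "Y = X \<union> (Y - X)" using assms by auto
  show ?thesis
    apply (rule comm_GG_from)
      apply (subst Y, subst xi_union[OF D(2) X D(1)])
      apply (rule comm_add[OF GG_xi[OF X] GG_xiY[OF X D(1) D(2)]])
     apply (subst Y, subst de_union[OF D(2) X D(1)])
     apply (rule comm_add[OF GG_de[OF X] GG_deY[OF X D(1) D(2)]])
    apply (subst Y, subst Rp_union[OF D(2) X D(1)])
    apply (rule comm_mult[OF GG_Rp[OF X] GG_RpY[OF X D(1) D(2)]])
    done
qed

lemma GG_disj: assumes "X \<subseteq> {1..n}" "Y \<subseteq> {1..n}" "X \<inter> Y = {}" shows "comm (GG X) (GG Y)"
  by (rule comm_GG_from[OF GG_xiY[OF assms] GG_deY[OF assms] GG_RpY[OF assms]])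

lemma GG_rel: assumes X: "X \<subseteq> {1..n}" and Y: "Y \<subseteq> {1..n}" and h: "X \<subseteq> Y \<or> Y \<subseteq> X \<or> X \<inter> Y = {}"
  shows "comm (GG X) (GG Y)"
  using h
proof (elim disjE)
  assume "X \<subseteq> Y" then show ?thesis by (rule GG_sub[OF _ Y])
next
  assume "Y \<subseteq> X" then show ?thesis by (rule comm_sym[OF GG_sub[OF _ X]])
next
  assume "X \<inter> Y = {}" then show ?thesis by (rule GG_disj[OF X Y])
qed

end


lemma assoc_rule: "u * v = w \<Longrightarrow> u * (v * z) = w * (z::'a::semigroup_mult)"
  by (simp add: mult.assoc[symmetric])

definition H2 :: "'a::{ring,monoid_mult} \<Rightarrow> 'a \<Rightarrow> 'a \<Rightarrow> 'a \<Rightarrow> 'a \<Rightarrow> 'a \<Rightarrow> 'a \<Rightarrow> 'a \<Rightarrow> 'a" where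
  "H2 g1 x1 d1 r1 g2 x2 d2 r2 = (g1 * r1 + g1 * r1 + g2 * r2 + g2 * r2 + 1 + x1 * d2 + x1 * d2 + x2 * d1 + x2 * d1) * (r1 * r2)"

definition H3 :: "'a::{ring,monoid_mult} \<Rightarrow> 'a \<Rightarrow> 'a \<Rightarrow> 'a \<Rightarrow> 'a \<Rightarrow> 'a \<Rightarrow> 'a \<Rightarrow> 'a \<Rightarrow> 'a \<Rightarrow> 'a \<Rightarrow> 'a \<Rightarrow> 'a \<Rightarrow> 'a" where
  "H3 gA xA dA rA gb xb db rb gc xc dc rc = (gA * rA + gA * rA + gb * rb + gb * rb + gc * rc + gc * rc + 1 + 1
     + xA * db + xA * db + xb * dA + xb * dA + xA * dc + xA * dc + xc * dA + xc * dA + xb * dc + xb * dc + xc * db + xc * db)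
     * (rA * (rb * rc))"

locale bi =
  fixes gA xA dA rA gb xb db rb gc xc dc rc :: "'a::{ring,monoid_mult}"
  assumes
    r0: "rA * rA = 1"
    and r1: "rA * xA = - (xA * rA)"
    and r2: "rA * dA = - (dA * rA)"
    and r3: "xA * gA = gA * xA"
    and r4: "dA * gA = gA * dA"
    and r5: "rA * gA = gA * rA"
    and r6: "dA * xA = xA * dA - gA * rA - gA * rA - 1"
    and r7: "rb * rb = 1"
    and r8: "rb * xb = - (xb * rb)"
    and r9: "rb * db = - (db * rb)"
    and r10: "xb * gb = gb * xb"
    and r11: "db * gb = gb * db"
    and r12: "rb * gb = gb * rb"
    and r13: "db * xb = xb * db - gb * rb - gb * rb - 1"
    and r14: "rc * rc = 1"
    and r15: "rc * xc = - (xc * rc)"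
    and r16: "rc * dc = - (dc * rc)"
    and r17: "xc * gc = gc * xc"
    and r18: "dc * gc = gc * dc"
    and r19: "rc * gc = gc * rc"
    and r20: "dc * xc = xc * dc - gc * rc - gc * rc - 1"
    and r21: "gb * gA = gA * gb"
    and r22: "xb * gA = gA * xb"
    and r23: "db * gA = gA * db"
    and r24: "rb * gA = gA * rb"
    and r25: "gb * xA = xA * gb"
    and r26: "xb * xA = - (xA * xb)"
    and r27: "db * xA = - (xA * db)"
    and r28: "rb * xA = xA * rb"
    and r29: "gb * dA = dA * gb"
    and r30: "xb * dA = - (dA * xb)"
    and r31: "db * dA = - (dA * db)"
    and r32: "rb * dA = dA * rb"
    and r33: "gb * rA = rA * gb"
    and r34: "xb * rA = rA * xb"
    and r35: "db * rA = rA * db"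
    and r36: "rb * rA = rA * rb"
    and r37: "gc * gA = gA * gc"
    and r38: "xc * gA = gA * xc"
    and r39: "dc * gA = gA * dc"
    and r40: "rc * gA = gA * rc"
    and r41: "gc * xA = xA * gc"
    and r42: "xc * xA = - (xA * xc)"
    and r43: "dc * xA = - (xA * dc)"
    and r44: "rc * xA = xA * rc"
    and r45: "gc * dA = dA * gc"
    and r46: "xc * dA = - (dA * xc)"
    and r47: "dc * dA = - (dA * dc)"
    and r48: "rc * dA = dA * rc"
    and r49: "gc * rA = rA * gc"
    and r50: "xc * rA = rA * xc"
    and r51: "dc * rA = rA * dc"
    and r52: "rc * rA = rA * rc"
    and r53: "gc * gb = gb * gc"
    and r54: "xc * gb = gb * xc"
    and r55: "dc * gb = gb * dc"
    and r56: "rc * gb = gb * rc"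
    and r57: "gc * xb = xb * gc"
    and r58: "xc * xb = - (xb * xc)"
    and r59: "dc * xb = - (xb * dc)"
    and r60: "rc * xb = xb * rc"
    and r61: "gc * db = db * gc"
    and r62: "xc * db = - (db * xc)"
    and r63: "dc * db = - (db * dc)"
    and r64: "rc * db = db * rc"
    and r65: "gc * rb = rb * gc"
    and r66: "xc * rb = rb * xc"
    and r67: "dc * rb = rb * dc"
    and r68: "rc * rb = rb * rc"
begin

lemmas rl = r0 r1 r2 r3 r4 r5 r6 r7 r8 r9 r10 r11 r12 r13 r14 r15 r16 r17 r18 r19 r20 r21 r22 r23 r24 r25 r26 r27 r28 r29 r30 r31 r32 r33 r34 r35 r36 r37 r38 r39 r40 r41 r42 r43 r44 r45 r46 r47 r48 r49 r50 r51 r52 r53 r54 r55 r56 r57 r58 r59 r60 r61 r62 r63 r64 r65 r66 r67 r68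
lemmas rla = rl[THEN assoc_rule]

lemma relI: "H2 gb xb db rb gc xc dc rc * H2 gA xA dA rA gb xb db rb + H2 gA xA dA rA gb xb db rb * H2 gb xb db rb gc xc dc rc
   = H2 gA xA dA rA gc xc dc rc + H2 gA xA dA rA gc xc dc rc
     + gb * H3 gA xA dA rA gb xb db rb gc xc dc rc + gb * H3 gA xA dA rA gb xb db rb gc xc dc rc
     + gb * H3 gA xA dA rA gb xb db rb gc xc dc rc + gb * H3 gA xA dA rA gb xb db rb gc xc dc rc
     + gA * gc + gA * gc + gA * gc + gA * gc + gA * gc + gA * gc + gA * gc + gA * gc"
  unfolding H2_def H3_def
  by (simp add: distrib_left distrib_right left_diff_distrib right_diff_distrib mult.assoc rl rla)

lemma relII: "H2 gA xA dA rA gc xc dc rc * H2 gA xA dA rA gb xb db rb + H2 gA xA dA rA gb xb db rb * H2 gA xA dA rA gc xc dc rc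
   = H2 gb xb db rb gc xc dc rc + H2 gb xb db rb gc xc dc rc
     + gA * H3 gA xA dA rA gb xb db rb gc xc dc rc + gA * H3 gA xA dA rA gb xb db rb gc xc dc rc
     + gA * H3 gA xA dA rA gb xb db rb gc xc dc rc + gA * H3 gA xA dA rA gb xb db rb gc xc dc rc
     + gb * gc + gb * gc + gb * gc + gb * gc + gb * gc + gb * gc + gb * gc + gb * gc"
  unfolding H2_def H3_def
  by (simp add: distrib_left distrib_right left_diff_distrib right_diff_distrib mult.assoc rl rla)

end

context dd begin

lemma blk_rr: "Rp X * Rp X = (1 :: 'v lop)" by (rule RpRp1)
lemma blk_rx: "X \<subseteq> {1..n} \<Longrightarrow> Rp X * xi X = - (xi X * Rp X)" using a_Rp_xi by (simp add: acomm_def)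
lemma blk_rd: "X \<subseteq> {1..n} \<Longrightarrow> Rp X * de X = - (de X * Rp X)" using a_Rp_de by (simp add: acomm_def)
lemma blk_xg: "X \<subseteq> {1..n} \<Longrightarrow> xi X * GG X = GG X * xi X" using GG_xi by (simp add: comm_def)
lemma blk_dg: "X \<subseteq> {1..n} \<Longrightarrow> de X * GG X = GG X * de X" using GG_de by (simp add: comm_def)
lemma blk_rg: "X \<subseteq> {1..n} \<Longrightarrow> Rp X * GG X = GG X * Rp X" using GG_Rp by (simp add: comm_def)
lemma blk_dx: "de X * xi X = xi X * de X - GG X * Rp X - GG X * Rp X - 1"
  using C_eq[of X] by (simp add: algebra_simps)

context
  fixes X Y assumes hX: "X \<subseteq> {1..n}" and hY: "Y \<subseteq> {1..n}" and dXY: "X \<inter> Y = {}"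
begin
lemma dYX: "Y \<inter> X = {}" using dXY by auto
lemma cr_gg: "GG Y * GG X = GG X * GG Y" using GG_disj[OF hY hX dYX] by (simp add: comm_def)
lemma cr_gx: "GG Y * xi X = xi X * GG Y" using GG_xiY[OF hY hX dYX] by (simp add: comm_def)
lemma cr_gd: "GG Y * de X = de X * GG Y" using GG_deY[OF hY hX dYX] by (simp add: comm_def)
lemma cr_gr: "GG Y * Rp X = Rp X * GG Y" using GG_RpY[OF hY hX dYX] by (simp add: comm_def)
lemma cr_xg: "xi Y * GG X = GG X * xi Y" using GG_xiY[OF hX hY dXY] by (simp add: comm_def)
lemma cr_xx: "xi Y * xi X = - (xi X * xi Y)" using a_xi_xi[OF hY hX dYX] by (simp add: acomm_def)
lemma cr_xd: "xi Y * de X = - (de X * xi Y)" using a_xi_de[OF hY hX dYX] by (simp add: acomm_def)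
lemma cr_xr: "xi Y * Rp X = Rp X * xi Y" using c_Rp_xi[OF hX hY dXY] by (simp add: comm_def)
lemma cr_dg: "de Y * GG X = GG X * de Y" using GG_deY[OF hX hY dXY] by (simp add: comm_def)
lemma cr_dx: "de Y * xi X = - (xi X * de Y)" using a_xi_de[OF hX hY dXY] by (simp add: acomm_def)
lemma cr_dd: "de Y * de X = - (de X * de Y)" using a_de_de[OF hY hX dYX] by (simp add: acomm_def)
lemma cr_dr: "de Y * Rp X = Rp X * de Y" using c_Rp_de[OF hX hY dXY] by (simp add: comm_def)
lemma cr_rg: "Rp Y * GG X = GG X * Rp Y" using GG_RpY[OF hX hY dXY] by (simp add: comm_def)
lemma cr_rx: "Rp Y * xi X = xi X * Rp Y" using c_Rp_xi[OF hY hX dYX] by (simp add: comm_def)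
lemma cr_rd: "Rp Y * de X = de X * Rp Y" using c_Rp_de[OF hY hX dYX] by (simp add: comm_def)
lemma cr_rr: "Rp Y * Rp X = (Rp X * Rp Y :: 'v lop)" using c_Rp_Rp by (simp add: comm_def)
end

lemma bi_inst:
  assumes hA: "A \<subseteq> {1..n}" and hB: "B \<subseteq> {1..n}" and hC: "C \<subseteq> {1..n}"
    and dAB: "A \<inter> B = {}" and dAC: "A \<inter> C = {}" and dBC: "B \<inter> C = {}"
  shows "bi (GG A) (xi A) (de A) (Rp A) (GG B) (xi B) (de B) (Rp B) (GG C) (xi C) (de C) (Rp C)"
proof (unfold_locales)
  show "(Rp A :: 'v lop) * (Rp A :: 'v lop) = 1"
    by (rule blk_rr)
  show "(Rp A :: 'v lop) * (xi A) = - ((xi A) * (Rp A :: 'v lop))"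
    by (rule blk_rx[OF hA])
  show "(Rp A :: 'v lop) * (de A) = - ((de A) * (Rp A :: 'v lop))"
    by (rule blk_rd[OF hA])
  show "(xi A) * (GG A) = (GG A) * (xi A)"
    by (rule blk_xg[OF hA])
  show "(de A) * (GG A) = (GG A) * (de A)"
    by (rule blk_dg[OF hA])
  show "(Rp A :: 'v lop) * (GG A) = (GG A) * (Rp A :: 'v lop)"
    by (rule blk_rg[OF hA])
  show "(de A) * (xi A) = (xi A) * (de A) - (GG A) * (Rp A :: 'v lop) - (GG A) * (Rp A :: 'v lop) - 1"
    by (rule blk_dx)
  show "(Rp B :: 'v lop) * (Rp B :: 'v lop) = 1"
    by (rule blk_rr)
  show "(Rp B :: 'v lop) * (xi B) = - ((xi B) * (Rp B :: 'v lop))"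
    by (rule blk_rx[OF hB])
  show "(Rp B :: 'v lop) * (de B) = - ((de B) * (Rp B :: 'v lop))"
    by (rule blk_rd[OF hB])
  show "(xi B) * (GG B) = (GG B) * (xi B)"
    by (rule blk_xg[OF hB])
  show "(de B) * (GG B) = (GG B) * (de B)"
    by (rule blk_dg[OF hB])
  show "(Rp B :: 'v lop) * (GG B) = (GG B) * (Rp B :: 'v lop)"
    by (rule blk_rg[OF hB])
  show "(de B) * (xi B) = (xi B) * (de B) - (GG B) * (Rp B :: 'v lop) - (GG B) * (Rp B :: 'v lop) - 1"
    by (rule blk_dx)
  show "(Rp C :: 'v lop) * (Rp C :: 'v lop) = 1"
    by (rule blk_rr)
  show "(Rp C :: 'v lop) * (xi C) = - ((xi C) * (Rp C :: 'v lop))"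
    by (rule blk_rx[OF hC])
  show "(Rp C :: 'v lop) * (de C) = - ((de C) * (Rp C :: 'v lop))"
    by (rule blk_rd[OF hC])
  show "(xi C) * (GG C) = (GG C) * (xi C)"
    by (rule blk_xg[OF hC])
  show "(de C) * (GG C) = (GG C) * (de C)"
    by (rule blk_dg[OF hC])
  show "(Rp C :: 'v lop) * (GG C) = (GG C) * (Rp C :: 'v lop)"
    by (rule blk_rg[OF hC])
  show "(de C) * (xi C) = (xi C) * (de C) - (GG C) * (Rp C :: 'v lop) - (GG C) * (Rp C :: 'v lop) - 1"
    by (rule blk_dx)
  show "(GG B) * (GG A) = (GG A) * (GG B)"
    by (rule cr_gg[OF hA hB dAB])
  show "(xi B) * (GG A) = (GG A) * (xi B)"
    by (rule cr_xg[OF hA hB dAB])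
  show "(de B) * (GG A) = (GG A) * (de B)"
    by (rule cr_dg[OF hA hB dAB])
  show "(Rp B :: 'v lop) * (GG A) = (GG A) * (Rp B :: 'v lop)"
    by (rule cr_rg[OF hA hB dAB])
  show "(GG B) * (xi A) = (xi A) * (GG B)"
    by (rule cr_gx[OF hA hB dAB])
  show "(xi B) * (xi A) = - ((xi A) * (xi B))"
    by (rule cr_xx[OF hA hB dAB])
  show "(de B) * (xi A) = - ((xi A) * (de B))"
    by (rule cr_dx[OF hA hB dAB])
  show "(Rp B :: 'v lop) * (xi A) = (xi A) * (Rp B :: 'v lop)"
    by (rule cr_rx[OF hA hB dAB])
  show "(GG B) * (de A) = (de A) * (GG B)"
    by (rule cr_gd[OF hA hB dAB])
  show "(xi B) * (de A) = - ((de A) * (xi B))"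
    by (rule cr_xd[OF hA hB dAB])
  show "(de B) * (de A) = - ((de A) * (de B))"
    by (rule cr_dd[OF hA hB dAB])
  show "(Rp B :: 'v lop) * (de A) = (de A) * (Rp B :: 'v lop)"
    by (rule cr_rd[OF hA hB dAB])
  show "(GG B) * (Rp A :: 'v lop) = (Rp A :: 'v lop) * (GG B)"
    by (rule cr_gr[OF hA hB dAB])
  show "(xi B) * (Rp A :: 'v lop) = (Rp A :: 'v lop) * (xi B)"
    by (rule cr_xr[OF hA hB dAB])
  show "(de B) * (Rp A :: 'v lop) = (Rp A :: 'v lop) * (de B)"
    by (rule cr_dr[OF hA hB dAB])
  show "(Rp B :: 'v lop) * (Rp A :: 'v lop) = (Rp A :: 'v lop) * (Rp B :: 'v lop)"
    by (rule cr_rr[OF hA hB dAB])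
  show "(GG C) * (GG A) = (GG A) * (GG C)"
    by (rule cr_gg[OF hA hC dAC])
  show "(xi C) * (GG A) = (GG A) * (xi C)"
    by (rule cr_xg[OF hA hC dAC])
  show "(de C) * (GG A) = (GG A) * (de C)"
    by (rule cr_dg[OF hA hC dAC])
  show "(Rp C :: 'v lop) * (GG A) = (GG A) * (Rp C :: 'v lop)"
    by (rule cr_rg[OF hA hC dAC])
  show "(GG C) * (xi A) = (xi A) * (GG C)"
    by (rule cr_gx[OF hA hC dAC])
  show "(xi C) * (xi A) = - ((xi A) * (xi C))"
    by (rule cr_xx[OF hA hC dAC])
  show "(de C) * (xi A) = - ((xi A) * (de C))"
    by (rule cr_dx[OF hA hC dAC])
  show "(Rp C :: 'v lop) * (xi A) = (xi A) * (Rp C :: 'v lop)"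
    by (rule cr_rx[OF hA hC dAC])
  show "(GG C) * (de A) = (de A) * (GG C)"
    by (rule cr_gd[OF hA hC dAC])
  show "(xi C) * (de A) = - ((de A) * (xi C))"
    by (rule cr_xd[OF hA hC dAC])
  show "(de C) * (de A) = - ((de A) * (de C))"
    by (rule cr_dd[OF hA hC dAC])
  show "(Rp C :: 'v lop) * (de A) = (de A) * (Rp C :: 'v lop)"
    by (rule cr_rd[OF hA hC dAC])
  show "(GG C) * (Rp A :: 'v lop) = (Rp A :: 'v lop) * (GG C)"
    by (rule cr_gr[OF hA hC dAC])
  show "(xi C) * (Rp A :: 'v lop) = (Rp A :: 'v lop) * (xi C)"
    by (rule cr_xr[OF hA hC dAC])
  show "(de C) * (Rp A :: 'v lop) = (Rp A :: 'v lop) * (de C)"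
    by (rule cr_dr[OF hA hC dAC])
  show "(Rp C :: 'v lop) * (Rp A :: 'v lop) = (Rp A :: 'v lop) * (Rp C :: 'v lop)"
    by (rule cr_rr[OF hA hC dAC])
  show "(GG C) * (GG B) = (GG B) * (GG C)"
    by (rule cr_gg[OF hB hC dBC])
  show "(xi C) * (GG B) = (GG B) * (xi C)"
    by (rule cr_xg[OF hB hC dBC])
  show "(de C) * (GG B) = (GG B) * (de C)"
    by (rule cr_dg[OF hB hC dBC])
  show "(Rp C :: 'v lop) * (GG B) = (GG B) * (Rp C :: 'v lop)"
    by (rule cr_rg[OF hB hC dBC])
  show "(GG C) * (xi B) = (xi B) * (GG C)"
    by (rule cr_gx[OF hB hC dBC])
  show "(xi C) * (xi B) = - ((xi B) * (xi C))"
    by (rule cr_xx[OF hB hC dBC])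
  show "(de C) * (xi B) = - ((xi B) * (de C))"
    by (rule cr_dx[OF hB hC dBC])
  show "(Rp C :: 'v lop) * (xi B) = (xi B) * (Rp C :: 'v lop)"
    by (rule cr_rx[OF hB hC dBC])
  show "(GG C) * (de B) = (de B) * (GG C)"
    by (rule cr_gd[OF hB hC dBC])
  show "(xi C) * (de B) = - ((de B) * (xi C))"
    by (rule cr_xd[OF hB hC dBC])
  show "(de C) * (de B) = - ((de B) * (de C))"
    by (rule cr_dd[OF hB hC dBC])
  show "(Rp C :: 'v lop) * (de B) = (de B) * (Rp C :: 'v lop)"
    by (rule cr_rd[OF hB hC dBC])
  show "(GG C) * (Rp B :: 'v lop) = (Rp B :: 'v lop) * (GG C)"
    by (rule cr_gr[OF hB hC dBC])
  show "(xi C) * (Rp B :: 'v lop) = (Rp B :: 'v lop) * (xi C)"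
    by (rule cr_xr[OF hB hC dBC])
  show "(de C) * (Rp B :: 'v lop) = (Rp B :: 'v lop) * (de C)"
    by (rule cr_dr[OF hB hC dBC])
  show "(Rp C :: 'v lop) * (Rp B :: 'v lop) = (Rp B :: 'v lop) * (Rp C :: 'v lop)"
    by (rule cr_rr[OF hB hC dBC])
qed

end


lemma four_cancel: "a + a + a + a = b + b + b + b \<Longrightarrow> a = (b :: 'v::real_vector lop)"
proof -
  have q: "sc (1/4) * (x + x + x + x) = (x :: 'v lop)" for x
  proof -
    have "sc (1/4) * (x + x + x + x) = (sc (1/4) + sc (1/4) + sc (1/4) + sc (1/4)) * x"
      by (simp add: distrib_left distrib_right)
    also have "sc (1/4) + sc (1/4) + sc (1/4) + sc (1/4) = (sc 1 :: 'v lop)" by (simp add: sc_add)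
    finally show ?thesis by (simp add: sc_one)
  qed
  assume "a + a + a + a = b + b + b + b"
  then show ?thesis using q[of a] q[of b] by metis
qed

lemma final_p: fixes u Q T2 h :: "'a::{ring,monoid_mult}"
  assumes a1: "u*Q + Q*u = u + T2 + T2" and a2: "T2*Q = Q*T2" and a3: "h*Q = Q*h" and a4: "T2*h = h*T2" and a5: "h + h = 1"
  shows "(u*(Q - h) - T2)*Q + Q*(u*(Q - h) - T2) = u*(Q - h) - T2"
proof -
  have "(u*(Q - h) - T2)*Q + Q*(u*(Q - h) - T2) = (u*Q + Q*u)*(Q - h) - (T2*Q + Q*T2)"
    using a3 by (simp add: algebra_simps)
  also have "\<dots> = (u + T2 + T2)*(Q - h) - (T2*Q + T2*Q)" using a1 a2 by simp
  also have "\<dots> = u*(Q - h) - (h + h)*T2" using a4 by (simp add: algebra_simps)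
  finally show ?thesis using a5 by simp
qed

lemma final_m: fixes u Q T2 h :: "'a::{ring,monoid_mult}"
  assumes a1: "u*Q + Q*u = - u + T2 + T2" and a2: "T2*Q = Q*T2" and a3: "h*Q = Q*h" and a4: "T2*h = h*T2" and a5: "h + h = 1"
  shows "(u*(Q + h) - T2)*Q + Q*(u*(Q + h) - T2) = - (u*(Q + h) - T2)"
proof -
  have "(u*(Q + h) - T2)*Q + Q*(u*(Q + h) - T2) = (u*Q + Q*u)*(Q + h) - (T2*Q + Q*T2)"
    using a3 by (simp add: algebra_simps)
  also have "\<dots> = (- u + T2 + T2)*(Q + h) - (T2*Q + T2*Q)" using a1 a2 by simp
  also have "\<dots> = - (u*(Q + h) - (h + h)*T2)" using a4 by (simp add: algebra_simps)
  finally show ?thesis using a5 by simp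
qed

context dd begin

lemma GG2: "GG Z + GG Z = (xi Z * de Z - de Z * xi Z - 1) * Rp Z"
proof -
  have "GG Z + GG Z = (hf + hf) * (xi Z * de Z - de Z * xi Z - 1) * Rp Z"
    by (simp add: GG_def SS_def distrib_right mult.assoc)
  then show ?thesis by (simp add: hf2)
qed

lemma union2: assumes hX: "X \<subseteq> {1..n}" and hY: "Y \<subseteq> {1..n}" and dXY: "X \<inter> Y = {}"
  shows "GG (X \<union> Y) + GG (X \<union> Y) = H2 (GG X) (xi X) (de X) (Rp X) (GG Y) (xi Y) (de Y) (Rp Y)"
proof -
  have dYX: "Y \<inter> X = {}" using dXY by auto
  have "(xi X + xi Y) * (de X + de Y) - (de X + de Y) * (xi X + xi Y) - 1
     = GG X * Rp X + GG X * Rp X + GG Y * Rp Y + GG Y * Rp Y + 1 + xi X * de Y + xi X * de Y + xi Y * de X + xi Y * de X"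
    by (simp add: distrib_left distrib_right blk_dx cr_dx[OF hX hY dXY] cr_dx[OF hY hX dYX] algebra_simps)
  then show ?thesis
    by (simp add: GG2 xi_union[OF dXY hX hY] de_union[OF dXY hX hY] Rp_union[OF dXY hX hY] H2_def)
qed

lemma union3: assumes hX: "X \<subseteq> {1..n}" and hY: "Y \<subseteq> {1..n}" and hW: "W \<subseteq> {1..n}"
  and dXY: "X \<inter> Y = {}" and dXW: "X \<inter> W = {}" and dYW: "Y \<inter> W = {}"
  shows "GG (X \<union> Y \<union> W) + GG (X \<union> Y \<union> W) = H3 (GG X) (xi X) (de X) (Rp X) (GG Y) (xi Y) (de Y) (Rp Y) (GG W) (xi W) (de W) (Rp W)"
proof -
  have dYX: "Y \<inter> X = {}" and dWX: "W \<inter> X = {}" and dWY: "W \<inter> Y = {}" and dXYW: "(X \<union> Y) \<inter> W = {}"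
    and hXY: "X \<union> Y \<subseteq> {1..n}" using assms by auto
  have "(xi X + xi Y + xi W) * (de X + de Y + de W) - (de X + de Y + de W) * (xi X + xi Y + xi W) - 1
     = GG X * Rp X + GG X * Rp X + GG Y * Rp Y + GG Y * Rp Y + GG W * Rp W + GG W * Rp W + 1 + 1
     + xi X * de Y + xi X * de Y + xi Y * de X + xi Y * de X + xi X * de W + xi X * de W + xi W * de X + xi W * de X
     + xi Y * de W + xi Y * de W + xi W * de Y + xi W * de Y"
    by (simp add: distrib_left distrib_right blk_dx cr_dx[OF hX hY dXY] cr_dx[OF hY hX dYX]
        cr_dx[OF hX hW dXW] cr_dx[OF hW hX dWX] cr_dx[OF hY hW dYW] cr_dx[OF hW hY dWY] algebra_simps)
  then show ?thesis
    by (simp add: GG2 xi_union[OF dXYW hXY hW] de_union[OF dXYW hXY hW] Rp_union[OF dXYW hXY hW]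
        xi_union[OF dXY hX hY] de_union[OF dXY hX hY] Rp_union[OF dXY hX hY] H3_def mult.assoc)
qed

end


context dd begin

lemma main_rels:
  assumes ln: "l + 2 \<le> n"
  shows "GG ({l+1} \<union> {l+2}) * GG ({1..l} \<union> {l+1}) + GG ({1..l} \<union> {l+1}) * GG ({l+1} \<union> {l+2})
      = GG ({1..l} \<union> {l+2}) + GG {l+1} * GG ({1..l} \<union> {l+1} \<union> {l+2}) + GG {l+1} * GG ({1..l} \<union> {l+1} \<union> {l+2})
        + GG {1..l} * GG {l+2} + GG {1..l} * GG {l+2}" (is ?I)
    and "GG ({1..l} \<union> {l+2}) * GG ({1..l} \<union> {l+1}) + GG ({1..l} \<union> {l+1}) * GG ({1..l} \<union> {l+2})
      = GG ({l+1} \<union> {l+2}) + GG {1..l} * GG ({1..l} \<union> {l+1} \<union> {l+2}) + GG {1..l} * GG ({1..l} \<union> {l+1} \<union> {l+2})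
        + GG {l+1} * GG {l+2} + GG {l+1} * GG {l+2}" (is ?II)
proof -
  define A where "A = {1..l}"
  define B where "B = {l+1}"
  define C where "C = {l+2}"
  have hA: "A \<subseteq> {1..n}" and hB: "B \<subseteq> {1..n}" and hC: "C \<subseteq> {1..n}"
    and dAB: "A \<inter> B = {}" and dAC: "A \<inter> C = {}" and dBC: "B \<inter> C = {}"
    using ln by (auto simp: A_def B_def C_def)
  interpret bi "GG A" "xi A" "de A" "Rp A" "GG B" "xi B" "de B" "Rp B" "GG C" "xi C" "de C" "Rp C"
    by (rule bi_inst[OF hA hB hC dAB dAC dBC])
  let ?U = "GG (B \<union> C)" and ?Q = "GG (A \<union> B)" and ?W = "GG (A \<union> C)" and ?R = "GG (A \<union> B \<union> C)"
  have eI: "(?U + ?U) * (?Q + ?Q) + (?Q + ?Q) * (?U + ?U) = (?W + ?W) + (?W + ?W) + GG B * (?R + ?R) + GG B * (?R + ?R)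
     + GG B * (?R + ?R) + GG B * (?R + ?R) + GG A * GG C + GG A * GG C + GG A * GG C + GG A * GG C
     + GG A * GG C + GG A * GG C + GG A * GG C + GG A * GG C"
    using relI by (simp only: union2[OF hB hC dBC] union2[OF hA hB dAB] union2[OF hA hC dAC] union3[OF hA hB hC dAB dAC dBC])
  have "?U * ?Q + ?Q * ?U = ?W + GG B * ?R + GG B * ?R + GG A * GG C + GG A * GG C"
    by (rule four_cancel) (use eI in \<open>simp add: algebra_simps\<close>)
  then show ?I by (simp add: A_def B_def C_def)
  have eII: "(?W + ?W) * (?Q + ?Q) + (?Q + ?Q) * (?W + ?W) = (?U + ?U) + (?U + ?U) + GG A * (?R + ?R) + GG A * (?R + ?R)
     + GG A * (?R + ?R) + GG A * (?R + ?R) + GG B * GG C + GG B * GG C + GG B * GG C + GG B * GG C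
     + GG B * GG C + GG B * GG C + GG B * GG C + GG B * GG C"
    using relII by (simp only: union2[OF hB hC dBC] union2[OF hA hB dAB] union2[OF hA hC dAC] union3[OF hA hB hC dAB dAC dBC])
  have "?W * ?Q + ?Q * ?W = ?U + GG A * ?R + GG A * ?R + GG B * GG C + GG B * GG C"
    by (rule four_cancel) (use eII in \<open>simp add: algebra_simps\<close>)
  then show ?II by (simp add: A_def B_def C_def)
qed

end


lemma rep_Mx_f: "rep (Mx i) = mulx i" by (simp add: Mx_def abs_inverse lin_mulx)
lemma rep_Tm_f: "rep (Tm \<mu> i) = dunkl \<mu> i" by (simp add: Tm_def abs_inverse lin_dunkl)
lemma rep_Rp_f: "rep (Rp X) = refl_prod X" by (simp add: Rp_def abs_inverse lin_refl_prod)
lemma rep_Em_f: "linear (e i) \<Longrightarrow> rep (Em e i) = cliff e i" by (simp add: Em_def abs_inverse lin_cliff)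

context dd begin

lemma rep_xi: "X \<subseteq> {1..n} \<Longrightarrow> rep (xi X) = xvec e X"
  unfolding xi_def xvec_def rep_sum
  by (rule ext)+ (auto simp: rep_times rep_Em_f rep_Mx_f lin_e subset_iff intro!: sum.cong)
lemma rep_de: "X \<subseteq> {1..n} \<Longrightarrow> rep (de X) = dirac \<mu> e X"
  unfolding de_def dirac_def rep_sum
  by (rule ext)+ (auto simp: rep_times rep_Em_f rep_Tm_f lin_e subset_iff intro!: sum.cong)

lemma rep_GG: "X \<subseteq> {1..n} \<Longrightarrow> rep (GG X) = Gamma \<mu> e X"
  unfolding GG_def SS_def hf_def Gamma_def S_op_def commutator_def op_minus_def op_scale_def
  by (simp add: rep_times rep_minus rep_one rep_sc_fun rep_xi rep_de rep_Rp_f fun_eq_iff)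

lemma sub_n: "l + 2 \<le> n \<Longrightarrow> Z \<subseteq> {1..l+2} \<Longrightarrow> Z \<subseteq> {1..n}" by auto

lemma prop_dd:
  assumes "n \<ge> 3" and "l \<in> {1..n-2}" and "s = 1 \<or> s = -1"
  shows "(\<forall>j\<in>{1..n}. j \<noteq> l + 1 \<longrightarrow>
            (\<forall>f\<in>poly_space n. commutator (K_op \<mu> e s l) (Gamma \<mu> e {1..j}) f = (\<lambda>\<alpha>. 0)))
       \<and> (\<forall>f\<in>poly_space n.
            anticommutator (K_op \<mu> e s l) (Gamma \<mu> e {1..l+1}) f = op_scale s (K_op \<mu> e s l) f)"
proof -
  have ln: "l + 2 \<le> n" using assms(1,2) by auto
  define P where "P = GG {1..l}"
  define gB where "gB = GG {l+1}"
  define gC where "gC = GG {l+2}"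
  define Q where "Q = GG ({1..l} \<union> {l+1})"
  define U where "U = GG ({l+1} \<union> {l+2})"
  define W where "W = GG ({1..l} \<union> {l+2})"
  define R where "R = GG ({1..l} \<union> {l+1} \<union> {l+2})"
  define Kl where "Kl = (U + sc s * W) * (Q - sc (s/2)) - (gC + sc s * R) * (P + sc s * gB)"
  have s1: "{l+1, l+2} = {l+1} \<union> {l+2}" by auto
  have s2: "{1..l+2} - {l+1} = {1..l} \<union> {l+2}" by auto
  have s3: "{1..l+1} = {1..l} \<union> {l+1}" by auto
  have s4: "{1..l+2} = {1..l} \<union> {l+1} \<union> {l+2}" by auto
  have sub: "{l+1} \<union> {l+2} \<subseteq> {1..n}" "{1..l} \<union> {l+2} \<subseteq> {1..n}" "{1..l} \<union> {l+1} \<subseteq> {1..n}"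
    "{l+2} \<subseteq> {1..n}" "{1..l} \<union> {l+1} \<union> {l+2} \<subseteq> {1..n}" "{1..l} \<subseteq> {1..n}" "{l+1} \<subseteq> {1..n}"
    using ln by auto
  have gU: "Gamma \<mu> e {l+1, l+2} = rep U" unfolding U_def s1 by (rule rep_GG[OF sub(1), symmetric])
  have gW: "Gamma \<mu> e ({1..l+2} - {l+1}) = rep W" unfolding W_def s2 by (rule rep_GG[OF sub(2), symmetric])
  have gQ: "Gamma \<mu> e {1..l+1} = rep Q" unfolding Q_def s3 by (rule rep_GG[OF sub(3), symmetric])
  have gC': "Gamma \<mu> e {l+2} = rep gC" unfolding gC_def by (rule rep_GG[OF sub(4), symmetric])
  have gR: "Gamma \<mu> e {1..l+2} = rep R" unfolding R_def s4 by (rule rep_GG[OF sub(5), symmetric])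
  have gP: "Gamma \<mu> e {1..l} = rep P" unfolding P_def by (rule rep_GG[OF sub(6), symmetric])
  have gB': "Gamma \<mu> e {l+1} = rep gB" unfolding gB_def by (rule rep_GG[OF sub(7), symmetric])
  have Krep: "K_op \<mu> e s l = rep Kl"
    unfolding K_op_def gU gW gQ gC' gR gP gB'
    by (simp add: Kl_def op_minus_def op_plus_def op_scale_def rep_times rep_plus rep_minus rep_sc_fun fun_eq_iff)
  have part1: "Kl * GG {1..j} = GG {1..j} * Kl" if j: "j \<in> {1..n}" "j \<noteq> l + 1" for j
  proof -
    have hj: "{1..j} \<subseteq> {1..n}" using j by auto
    have cj: "comm (GG {1..j}) (GG Z)" if "Z \<in> {{1..l}, {l+1}, {l+2}, {1..l} \<union> {l+1}, {l+1} \<union> {l+2}, {1..l} \<union> {l+2}, {1..l} \<union> {l+1} \<union> {l+2}}" for Z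
    proof (rule GG_rel[OF hj])
      show "Z \<subseteq> {1..n}" using that ln by auto
      show "{1..j} \<subseteq> Z \<or> Z \<subseteq> {1..j} \<or> {1..j} \<inter> Z = {}"
      proof (cases "j \<le> l")
        case True then show ?thesis using that by auto
      next
        case False then have "l + 2 \<le> j" using j by auto
        then show ?thesis using that by auto
      qed
    qed
    have "comm (GG {1..j}) Kl"
      unfolding Kl_def U_def W_def Q_def gC_def R_def P_def gB_def
      by (intro comm_diff comm_mult comm_add comm_scR cj) auto
    then show ?thesis by (simp add: comm_def)
  qed
  have QK: "Kl * Q + Q * Kl = sc s * Kl"
  proof -
    have hh: "Z \<subseteq> {1..n}" if "Z \<in> {{1..l}, {l+1}, {l+2}, {1..l} \<union> {l+1}, {l+1} \<union> {l+2}, {1..l} \<union> {l+2}, {1..l} \<union> {l+1} \<union> {l+2}}" for Z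
      using that ln by auto
    have c1: "gB * R = R * gB" unfolding gB_def R_def by (rule GG_rel[THEN comm_def[THEN iffD1]]) (use ln in auto)
    have c2: "P * gC = gC * P" unfolding P_def gC_def by (rule GG_rel[THEN comm_def[THEN iffD1]]) (use ln in auto)
    have c3: "P * R = R * P" unfolding P_def R_def by (rule GG_rel[THEN comm_def[THEN iffD1]]) (use ln in auto)
    have c4: "gB * gC = gC * gB" unfolding gB_def gC_def by (rule GG_rel[THEN comm_def[THEN iffD1]]) (use ln in auto)
    have cQ: "comm Q Z" if "Z \<in> {P, gB, gC, R}" for Z
      using that unfolding Q_def P_def gB_def gC_def R_def by (auto intro!: GG_rel) (use ln in auto)
    have rI: "U * Q + Q * U = W + gB * R + gB * R + P * gC + P * gC"
      using main_rels(1)[OF ln] unfolding U_def Q_def W_def gB_def R_def P_def gC_def .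
    have rII: "W * Q + Q * W = U + P * R + P * R + gB * gC + gB * gC"
      using main_rels(2)[OF ln] unfolding U_def Q_def W_def gB_def R_def P_def gC_def .
    have hf_c: "hf * Q = Q * hf" by (simp add: hf_def sc_central)
    show ?thesis using assms(3)
    proof
      assume s: "s = 1"
      have K1: "Kl = (U + W) * (Q - hf) - (gC + R) * (P + gB)" by (simp add: Kl_def s sc_one hf_def)
      let ?T = "(gC + R) * (P + gB)"
      have a1: "(U + W) * Q + Q * (U + W) = (U + W) + ?T + ?T"
      proof -
        have "(U + W) * Q + Q * (U + W) = (U * Q + Q * U) + (W * Q + Q * W)" by (simp add: algebra_simps)
        also have "\<dots> = (U + W) + ?T + ?T" unfolding rI rII by (simp add: algebra_simps c1 c2 c3 c4)
        finally show ?thesis .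
      qed
      have a2: "?T * Q = Q * ?T"
        using comm_mult[OF comm_add[OF cQ cQ] comm_add[OF cQ cQ]] by (simp add: comm_def)
      have a4: "?T * hf = hf * ?T" by (simp add: hf_def sc_central)
      have "Kl * Q + Q * Kl = Kl" unfolding K1 by (rule final_p[OF a1 a2 hf_c a4 hf2])
      then show ?thesis by (simp add: s sc_one)
    next
      assume s: "s = -1"
      have m: "sc (- 1 / 2) = - hf" using sc_uminus[of "1/2"] by (simp add: hf_def)
      have K1: "Kl = (U - W) * (Q + hf) - (gC - R) * (P - gB)"
        by (simp add: Kl_def s sc_uminus sc_one m hf_def)
      let ?T = "(gC - R) * (P - gB)"
      have a1: "(U - W) * Q + Q * (U - W) = - (U - W) + ?T + ?T"
      proof -
        have "(U - W) * Q + Q * (U - W) = (U * Q + Q * U) - (W * Q + Q * W)" by (simp add: algebra_simps)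
        also have "\<dots> = - (U - W) + ?T + ?T" unfolding rI rII by (simp add: algebra_simps c1 c2 c3 c4)
        finally show ?thesis .
      qed
      have a2: "?T * Q = Q * ?T"
        using comm_mult[OF comm_diff[OF cQ cQ] comm_diff[OF cQ cQ]] by (simp add: comm_def)
      have a4: "?T * hf = hf * ?T" by (simp add: hf_def sc_central)
      have "Kl * Q + Q * Kl = - Kl" unfolding K1 by (rule final_m[OF a1 a2 hf_c a4 hf2])
      then show ?thesis by (simp add: s sc_uminus sc_one)
    qed
  qed
  show ?thesis
  proof (intro conjI ballI impI)
    fix j f assume j: "j \<in> {1..n}" "j \<noteq> l + 1"
    have hj: "{1..j} \<subseteq> {1..n}" using j by auto
    have "commutator (rep Kl) (rep (GG {1..j})) f = rep (Kl * GG {1..j} - GG {1..j} * Kl) f"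
      by (simp add: commutator_def op_minus_def rep_times rep_minus)
    have g: "Gamma \<mu> e {1..j} = rep (GG {1..j})" by (rule rep_GG[OF hj, symmetric])
    show "commutator (K_op \<mu> e s l) (Gamma \<mu> e {1..j}) f = (\<lambda>\<alpha>. 0)"
      unfolding Krep g \<open>commutator (rep Kl) (rep (GG {1..j})) f = rep (Kl * GG {1..j} - GG {1..j} * Kl) f\<close>
      using part1[OF j] by (simp add: rep_zero)
  next
    fix f
    have "anticommutator (rep Kl) (rep Q) f = rep (Kl * Q + Q * Kl) f"
      by (simp add: anticommutator_def op_plus_def rep_times rep_plus)
    also have "\<dots> = op_scale s (rep Kl) f"
      by (simp add: QK op_scale_def rep_times rep_sc_fun)
    finally show "anticommutator (K_op \<mu> e s l) (Gamma \<mu> e {1..l+1}) f = op_scale s (K_op \<mu> e s l) f"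
      unfolding Krep gQ .
  qed
qed

end

theorem proposition9:
  fixes n l :: nat and \<mu> :: "nat \<Rightarrow> real" and e :: "nat \<Rightarrow> 'v::real_vector \<Rightarrow> 'v" and s :: real
  assumes "n \<ge> 3" and "l \<in> {1..n-2}"
    and "\<forall>i\<in>{1..n}. \<mu> i > 0"
    and "clifford_module n e"
    and "s = 1 \<or> s = -1"
  shows "(\<forall>j\<in>{1..n}. j \<noteq> l + 1 \<longrightarrow>
            (\<forall>f\<in>poly_space n. commutator (K_op \<mu> e s l) (Gamma \<mu> e {1..j}) f = (\<lambda>\<alpha>. 0)))
       \<and> (\<forall>f\<in>poly_space n.
            anticommutator (K_op \<mu> e s l) (Gamma \<mu> e {1..l+1}) f = op_scale s (K_op \<mu> e s l) f)"
  proof -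
  interpret dd n \<mu> e by (unfold_locales) (rule assms(4))
  show ?thesis by (rule prop_dd[OF assms(1) assms(2) assms(5)])
qed

end
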